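(* Let $\chi:T\to\overline{\mathbf F}_p^\times$ be a smooth character with $\chi\neq\chi^s$, and let $\pi$ be a smooth representation of $G$. Then $\mathrm{Hom}_G(\mathrm{Ind}_P^G\chi,\pi)=\mathrm{Hom}_P(\mathrm{Ind}_P^G\chi,\pi)$.
   Context: $F$ non-Archimedean local field of residual characteristic $p$, $G=\mathrm{GL}_2(F)$, $P$ the upper triangular Borel subgroup, $U$ its unipotent radical, $T$ the diagonal torus; characters of $T$ are viewed as characters of $P$ via $P\to P/U\cong T$. $\chi^s(\mathrm{diag}(a,d))=\chi(\mathrm{diag}(d,a))$. $\mathrm{Ind}_P^G\chi$ is the space of locally constant $f:G\to\overline{\mathbf F}_p$ with $f(bg)=\chi(b)f(g)$ for $b\in P$, with $G$ acting by right translation. Representations are smooth on $\overline{\mathbf F}_p$-vector spaces. *)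

theory Defs
  imports "HOL-Analysis.Determinants" "HOL-Computational_Algebra.Polynomial"
begin

text \<open>v x is the valuation of x for x \<noteq> 0; the value v 0 is irrelevant (v(0) = +infinity).
  vge v x n means v(x) \<ge> n, with the convention v(0) = +infinity.\<close>

definition vge :: "('a::field \<Rightarrow> int) \<Rightarrow> 'a \<Rightarrow> int \<Rightarrow> bool" where
  "vge v x n \<longleftrightarrow> x = 0 \<or> n \<le> v x"

definition discrete_valuation :: "('a::field \<Rightarrow> int) \<Rightarrow> bool" where
  "discrete_valuation v \<longleftrightarrow>
     (\<forall>x y. x \<noteq> 0 \<longrightarrow> y \<noteq> 0 \<longrightarrow> v (x * y) = v x + v y) \<and>
     (\<forall>x y. x \<noteq> 0 \<longrightarrow> y \<noteq> 0 \<longrightarrow> x + y \<noteq> 0 \<longrightarrow> min (v x) (v y) \<le> v (x + y)) \<and>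
     (\<exists>x. x \<noteq> 0 \<and> v x = 1)"

text \<open>Non-Archimedean local field with residual characteristic p: complete for a normalized
  discrete valuation, with finite residue field of characteristic p.\<close>

definition nonarch_local_field :: "('a::field \<Rightarrow> int) \<Rightarrow> nat \<Rightarrow> bool" where
  "nonarch_local_field v p \<longleftrightarrow>
     discrete_valuation v \<and>
     (\<forall>s :: nat \<Rightarrow> 'a. (\<forall>n. \<exists>N. \<forall>i\<ge>N. \<forall>j\<ge>N. vge v (s i - s j) n) \<longrightarrow>
          (\<exists>L. \<forall>n. \<exists>N. \<forall>i\<ge>N. vge v (s i - L) n)) \<and>
     (\<exists>R. finite R \<and> R \<subseteq> {x. vge v x 0} \<and> (\<forall>x. vge v x 0 \<longrightarrow> (\<exists>r\<in>R. vge v (x - r) 1))) \<and>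
     prime p \<and> vge v (of_nat p) 1"

definition is_alg_closure_Fp :: "'k::field itself \<Rightarrow> nat \<Rightarrow> bool" where
  "is_alg_closure_Fp _ p \<longleftrightarrow>
     of_nat p = (0::'k) \<and>
     (\<forall>q :: 'k poly. 0 < degree q \<longrightarrow> (\<exists>x. poly q x = 0)) \<and>
     (\<forall>x :: 'k. \<exists>n>0. x ^ (p ^ n) = x)"

definition GL2 :: "(('a::field)^2^2) set" where
  "GL2 = {g. det g \<noteq> 0}"

definition Borel :: "(('a::field)^2^2) set" where
  "Borel = {b \<in> GL2. b $ 2 $ 1 = 0}"

text \<open>Principal congruence subgroups K_n (n \<ge> 1); they form a basis of open neighbourhoods
  of the identity in GL_2(F).\<close>

definition congr_sub :: "('a::field \<Rightarrow> int) \<Rightarrow> int \<Rightarrow> ('a^2^2) set" where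
  "congr_sub v n = {g. \<forall>i j. vge v ((g - mat 1) $ i $ j) n}"

text \<open>A character of T is recorded as chi a d = chi(diag(a,d)) for a, d \<noteq> 0.\<close>

definition smooth_character :: "('a::field \<Rightarrow> int) \<Rightarrow> ('a \<Rightarrow> 'a \<Rightarrow> 'k::field) \<Rightarrow> bool" where
  "smooth_character v chi \<longleftrightarrow>
     (\<forall>a d a' d'. a \<noteq> 0 \<longrightarrow> d \<noteq> 0 \<longrightarrow> a' \<noteq> 0 \<longrightarrow> d' \<noteq> 0 \<longrightarrow>
        chi (a * a') (d * d') = chi a d * chi a' d') \<and>
     (\<forall>a d. a \<noteq> 0 \<longrightarrow> d \<noteq> 0 \<longrightarrow> chi a d \<noteq> 0) \<and>
     (\<exists>n\<ge>1. \<forall>a d. vge v (a - 1) n \<longrightarrow> vge v (d - 1) n \<longrightarrow> chi a d = 1)"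

definition char_swap :: "('a \<Rightarrow> 'a \<Rightarrow> 'k) \<Rightarrow> 'a \<Rightarrow> 'a \<Rightarrow> 'k" where
  "char_swap chi a d = chi d a"

definition char_eq :: "('a::field \<Rightarrow> 'a \<Rightarrow> 'k) \<Rightarrow> ('a \<Rightarrow> 'a \<Rightarrow> 'k) \<Rightarrow> bool" where
  "char_eq chi psi \<longleftrightarrow> (\<forall>a d. a \<noteq> 0 \<longrightarrow> d \<noteq> 0 \<longrightarrow> chi a d = psi a d)"

definition loc_const_G :: "('a::field \<Rightarrow> int) \<Rightarrow> ('a^2^2 \<Rightarrow> 'k) \<Rightarrow> bool" where
  "loc_const_G v f \<longleftrightarrow> (\<forall>g\<in>GL2. \<exists>n\<ge>1. \<forall>k\<in>congr_sub v n. f (g ** k) = f g)"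

text \<open>Ind_P^G chi, as functions on 2x2 matrices vanishing off GL_2(F).\<close>

definition Ind :: "('a::field \<Rightarrow> int) \<Rightarrow> ('a \<Rightarrow> 'a \<Rightarrow> 'k::field) \<Rightarrow> (('a^2^2) \<Rightarrow> 'k) set" where
  "Ind v chi = {f. loc_const_G v f \<and> (\<forall>x. x \<notin> GL2 \<longrightarrow> f x = 0) \<and>
       (\<forall>b\<in>Borel. \<forall>g\<in>GL2. f (b ** g) = chi (b $ 1 $ 1) (b $ 2 $ 2) * f g)}"

definition right_transl :: "'a::field^2^2 \<Rightarrow> ('a^2^2 \<Rightarrow> 'k::zero) \<Rightarrow> 'a^2^2 \<Rightarrow> 'k" where
  "right_transl h f = (\<lambda>x. if x \<in> GL2 then f (x ** h) else 0)"

definition smooth_rep ::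
  "('a::field \<Rightarrow> int) \<Rightarrow> ('k::field \<Rightarrow> 'v::ab_group_add \<Rightarrow> 'v) \<Rightarrow> ('a^2^2 \<Rightarrow> 'v \<Rightarrow> 'v) \<Rightarrow> bool" where
  "smooth_rep v smul rho \<longleftrightarrow>
     vector_space smul \<and>
     (\<forall>g\<in>GL2. Vector_Spaces.linear smul smul (rho g)) \<and>
     (\<forall>x. rho (mat 1) x = x) \<and>
     (\<forall>g\<in>GL2. \<forall>h\<in>GL2. \<forall>x. rho (g ** h) x = rho g (rho h x)) \<and>
     (\<forall>x. \<exists>n\<ge>1. \<forall>k\<in>congr_sub v n. rho k x = x)"

definition Hom_H ::
  "('a::field^2^2) set \<Rightarrow> ('a \<Rightarrow> int) \<Rightarrow> ('a \<Rightarrow> 'a \<Rightarrow> 'k::field) \<Rightarrow>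
   ('k \<Rightarrow> 'v::ab_group_add \<Rightarrow> 'v) \<Rightarrow> ('a^2^2 \<Rightarrow> 'v \<Rightarrow> 'v) \<Rightarrow> (('a^2^2 \<Rightarrow> 'k) \<Rightarrow> 'v) set" where
  "Hom_H H v chi smul rho = {phi.
     (\<forall>f1\<in>Ind v chi. \<forall>f2\<in>Ind v chi. phi (\<lambda>x. f1 x + f2 x) = phi f1 + phi f2) \<and>
     (\<forall>c. \<forall>f\<in>Ind v chi. phi (\<lambda>x. c * f x) = smul c (phi f)) \<and>
     (\<forall>h\<in>H. \<forall>f\<in>Ind v chi. phi (right_transl h f) = rho h (phi f))}"

end

theory Submission
  imports Defs
begin


section \<open>Matrices\<close>

definition mk :: "'a::field \<Rightarrow> 'a \<Rightarrow> 'a \<Rightarrow> 'a \<Rightarrow> 'a^2^2" where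
  "mk a b c d = (\<chi> i j. if i = 1 then (if j = 1 then a else b) else (if j = 1 then c else d))"

lemma two_ne: "(1::2) \<noteq> 2" "(2::2) \<noteq> 1" by auto

lemma mk_nth[simp]:
  "mk a b c d $ 1 $ 1 = a" "mk a b c d $ 1 $ 2 = b" "mk a b c d $ 2 $ 1 = c" "mk a b c d $ 2 $ 2 = d"
  by (auto simp: mk_def)

lemma mk_eta: "A = mk (A$1$1) (A$1$2) (A$2$1) (A$2$2)"
  by (auto simp: vec_eq_iff forall_2)

lemma mk_cases: obtains a b c d where "A = mk a b c d"
  using mk_eta by blast

lemma mk_eq_iff[simp]: "mk a b c d = mk a' b' c' d' \<longleftrightarrow> a = a' \<and> b = b' \<and> c = c' \<and> d = d'"
  by (metis mk_nth)

lemma mk_mult[simp]: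
  "mk a b c d ** mk a' b' c' d' = mk (a*a'+b*c') (a*b'+b*d') (c*a'+d*c') (c*b'+d*d')"
  by (auto simp: vec_eq_iff forall_2 matrix_matrix_mult_def sum_2)

lemma det_mk[simp]: "det (mk a b c d) = a*d - b*c"
  by (simp add: det_2)

lemma mat1_mk: "mat 1 = mk 1 0 0 1"
  by (auto simp: vec_eq_iff forall_2 mat_def)

lemma mk_minus: "mk a b c d - mat 1 = mk (a-1) b c (d-1)"
  by (auto simp: vec_eq_iff forall_2 mat_def)

lemma GL2_mk[simp]: "mk a b c d \<in> GL2 \<longleftrightarrow> a*d - b*c \<noteq> 0"
  by (simp add: GL2_def)

lemma Borel_mk[simp]: "mk a b c d \<in> Borel \<longleftrightarrow> c = 0 \<and> a \<noteq> 0 \<and> d \<noteq> 0"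
  by (auto simp: Borel_def)

lemma congr_sub_mk: "mk a b c d \<in> congr_sub v n \<longleftrightarrow> vge v (a-1) n \<and> vge v b n \<and> vge v c n \<and> vge v (d-1) n"
  unfolding congr_sub_def by (simp add: forall_2 mat_def)


section \<open>Valuations\<close>

locale dval =
  fixes v :: "'a::field \<Rightarrow> int"
  assumes dv: "discrete_valuation v"
begin

lemma v_mult: "x \<noteq> 0 \<Longrightarrow> y \<noteq> 0 \<Longrightarrow> v (x * y) = v x + v y"
  using dv by (auto simp: discrete_valuation_def)

lemma v_ultra: "x \<noteq> 0 \<Longrightarrow> y \<noteq> 0 \<Longrightarrow> x + y \<noteq> 0 \<Longrightarrow> min (v x) (v y) \<le> v (x + y)"
  using dv by (auto simp: discrete_valuation_def)

lemma v_one[simp]: "v 1 = 0"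
  using v_mult[of 1 1] by simp

lemma v_m1[simp]: "v (-1) = 0"
  using v_mult[of "-1" "-1"] by simp

lemma v_minus[simp]: "v (- x) = v x"
proof (cases "x = 0")
  case False
  then show ?thesis using v_mult[of "-1" x] by simp
qed simp

lemma v_inverse: "x \<noteq> 0 \<Longrightarrow> v (inverse x) = - v x"
  using v_mult[of x "inverse x"] by simp

lemma v_divide: "x \<noteq> 0 \<Longrightarrow> y \<noteq> 0 \<Longrightarrow> v (x / y) = v x - v y"
  by (simp add: divide_inverse v_mult v_inverse)

lemma vge_iff: "x \<noteq> 0 \<Longrightarrow> vge v x n \<longleftrightarrow> n \<le> v x"
  by (simp add: vge_def)

lemma vge_0[simp]: "vge v 0 n"
  by (simp add: vge_def)

lemma vge_minus[simp]: "vge v (- x) n \<longleftrightarrow> vge v x n"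
  by (simp add: vge_def)

lemma vge_add: "vge v x n \<Longrightarrow> vge v y n \<Longrightarrow> vge v (x + y) n"
  unfolding vge_def using v_ultra[of x y] by fastforce

lemma vge_diff: "vge v x n \<Longrightarrow> vge v y n \<Longrightarrow> vge v (x - y) n"
  using vge_add[of x n "-y"] by simp

lemma vge_commute_diff: "vge v (x - y) n \<longleftrightarrow> vge v (y - x) n"
  using vge_minus[of "x - y" n] by simp

lemma vge_mono: "vge v x n \<Longrightarrow> m \<le> n \<Longrightarrow> vge v x m"
  by (auto simp: vge_def)

lemma vge_mult: "vge v x n \<Longrightarrow> vge v y m \<Longrightarrow> vge v (x * y) (n + m)"
  by (cases "x = 0 \<or> y = 0") (auto simp: vge_def v_mult)

lemma vge_one_iff: "vge v 1 n \<longleftrightarrow> n \<le> 0"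
  by (simp add: vge_def)

lemma vge_trans: "vge v (x - y) n \<Longrightarrow> vge v (y - z) n \<Longrightarrow> vge v (x - z) n"
  using vge_add[of "x - y" n "y - z"] by simp

lemma unit_v: assumes "vge v e 1" shows "1 + e \<noteq> 0" "v (1 + e) = 0"
proof -
  show ne: "1 + e \<noteq> 0"
  proof
    assume "1 + e = 0" then have "e = -1" by (simp add: eq_neg_iff_add_eq_0 add.commute)
    with assms show False by (simp add: vge_def)
  qed
  have a: "vge v (1 + e) 0" using vge_add[of 1 0 e] assms vge_mono[of e 1 0] by (simp add: vge_one_iff)
  have "vge v 1 1" if "vge v (1 + e) 1" using vge_diff[OF that assms] by simp
  then have "\<not> vge v (1 + e) 1" using vge_one_iff by force
  with a ne show "v (1 + e) = 0" by (simp add: vge_def)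
qed

lemma vge_mult_v0: "u \<noteq> 0 \<Longrightarrow> v u = 0 \<Longrightarrow> vge v (x * u) n \<longleftrightarrow> vge v x n"
  by (cases "x = 0") (auto simp: vge_def v_mult)

lemma vge_div_v0: "u \<noteq> 0 \<Longrightarrow> v u = 0 \<Longrightarrow> vge v (x / u) n \<longleftrightarrow> vge v x n"
  by (cases "x = 0") (auto simp: vge_def v_divide)

lemma vge_mult_iff: "y \<noteq> 0 \<Longrightarrow> vge v (x * y) n \<longleftrightarrow> vge v x (n - v y)"
  by (cases "x = 0") (auto simp: vge_def v_mult)

lemma vge_div_iff: "y \<noteq> 0 \<Longrightarrow> vge v (x / y) n \<longleftrightarrow> vge v x (n + v y)"
  by (cases "x = 0") (auto simp: vge_def v_divide)

lemma vge_ex: "x \<noteq> 0 \<Longrightarrow> \<exists>n. \<not> vge v x n"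
  by (rule exI[of _ "v x + 1"]) (auto simp: vge_def)

lemma vge_low: "\<exists>n. vge v x n"
  by (rule exI[of _ "v x"]) (auto simp: vge_def)

definition unif :: 'a where "unif = (SOME x. x \<noteq> 0 \<and> v x = 1)"

lemma unif: "unif \<noteq> 0" "v unif = 1"
proof -
  have "\<exists>x. x \<noteq> 0 \<and> v x = 1" using dv by (auto simp: discrete_valuation_def)
  then have "unif \<noteq> 0 \<and> v unif = 1" unfolding unif_def by (rule someI_ex)
  then show "unif \<noteq> 0" "v unif = 1" by auto
qed

definition pw :: "int \<Rightarrow> 'a" where "pw n = unif powi n"

lemma pw_ne[simp]: "pw n \<noteq> 0"
  using unif by (simp add: pw_def)

lemma pw_add: "pw (m + n) = pw m * pw n"
  using unif by (simp add: pw_def power_int_add)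

lemma pw_0[simp]: "pw 0 = 1" by (simp add: pw_def)

lemma v_unif_pow: "v (unif ^ k) = int k"
proof (induction k)
  case (Suc k)
  have "unif ^ k \<noteq> 0" using unif(1) by simp
  then show ?case using Suc unif by (simp add: v_mult)
qed simp

lemma v_pw[simp]: "v (pw n) = n"
proof (cases "n \<ge> 0")
  case True
  then have k: "n = int (nat n)" by simp
  have "pw n = unif ^ nat n" unfolding pw_def by (subst k) (rule power_int_of_nat)
  then show ?thesis using v_unif_pow True by simp
next
  case False
  then have k: "n = - int (nat (-n))" by simp
  have "pw n = inverse (unif ^ nat (-n))" unfolding pw_def
    by (subst k) (simp only: power_int_minus power_int_of_nat)
  moreover have "unif ^ nat (-n) \<noteq> 0" using unif by simp
  ultimately show ?thesis using v_unif_pow False by (simp add: v_inverse)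
qed

lemma vge_pw_mult: "vge v (x * pw n) m \<longleftrightarrow> vge v x (m - n)"
  by (simp add: vge_mult_iff)

end




definition Wm :: "'a::field^2^2" where "Wm = mk 0 1 1 0"
definition Um :: "'a::field \<Rightarrow> 'a^2^2" where "Um x = mk 1 x 0 1"
definition Lm :: "'a::field \<Rightarrow> 'a^2^2" where "Lm y = mk 1 0 y 1"
definition Dm :: "'a::field \<Rightarrow> 'a \<Rightarrow> 'a^2^2" where "Dm a d = mk a 0 0 d"

lemma matrix_mult_assoc': "A ** B ** C = A ** (B ** C)" by (simp add: matrix_mul_assoc)

lemma GL2_mult: "g \<in> GL2 \<Longrightarrow> h \<in> GL2 \<Longrightarrow> g ** h \<in> (GL2 :: (('a::field)^2^2) set)"
  by (simp add: GL2_def det_mul)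

lemma Borel_GL2: "b \<in> Borel \<Longrightarrow> b \<in> GL2" by (simp add: Borel_def)

lemma mat1_GL2[simp]: "(mat 1 :: ('a::field)^2^2) \<in> GL2" by (simp add: mat1_mk)

lemma rt_rt: "right_transl g (right_transl h f) = right_transl (g ** h) f"
  if "g \<in> GL2" "h \<in> GL2"
  using that by (auto simp: right_transl_def fun_eq_iff GL2_mult matrix_mul_assoc)

locale setting = dval v for v :: "'a::field \<Rightarrow> int" +
  fixes chi :: "'a \<Rightarrow> 'a \<Rightarrow> 'k::field" and smul :: "'k \<Rightarrow> 'v::ab_group_add \<Rightarrow> 'v"
    and rho :: "'a^2^2 \<Rightarrow> 'v \<Rightarrow> 'v" and phi :: "('a^2^2 \<Rightarrow> 'k) \<Rightarrow> 'v"
    and lev :: int and R0 :: "'a set"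
  assumes chi_mult: "a \<noteq> 0 \<Longrightarrow> d \<noteq> 0 \<Longrightarrow> a' \<noteq> 0 \<Longrightarrow> d' \<noteq> 0 \<Longrightarrow>
        chi (a * a') (d * d') = chi a d * chi a' d'"
    and chi_nz: "a \<noteq> 0 \<Longrightarrow> d \<noteq> 0 \<Longrightarrow> chi a d \<noteq> 0"
    and lev: "lev \<ge> 1"
    and chi_lev: "vge v (a - 1) lev \<Longrightarrow> vge v (d - 1) lev \<Longrightarrow> chi a d = 1"
    and chi_ne: "\<exists>a d. a \<noteq> 0 \<and> d \<noteq> 0 \<and> chi a d \<noteq> chi d a"
    and complete: "\<And>s :: nat \<Rightarrow> 'a. (\<forall>n. \<exists>N. \<forall>i\<ge>N. \<forall>j\<ge>N. vge v (s i - s j) n) \<Longrightarrow>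
          (\<exists>L. \<forall>n. \<exists>N. \<forall>i\<ge>N. vge v (s i - L) n)"
    and R0: "finite R0" "\<And>r. r \<in> R0 \<Longrightarrow> vge v r 0" "\<And>x. vge v x 0 \<Longrightarrow> \<exists>r\<in>R0. vge v (x - r) 1"
    and rep: "smooth_rep v smul rho"
    and phi: "phi \<in> Hom_H Borel v chi smul rho"
begin

abbreviation "V \<equiv> Ind v chi"
abbreviation "K \<equiv> congr_sub v"
abbreviation rt where "rt \<equiv> right_transl"

interpretation VS: vector_space smul
  using rep by (simp add: smooth_rep_def)

lemma chi_11[simp]: "chi 1 1 = 1"
  using chi_mult[of 1 1 1 1] chi_nz[of 1 1] by simp

lemma chi_inv: "a \<noteq> 0 \<Longrightarrow> d \<noteq> 0 \<Longrightarrow> chi (inverse a) (inverse d) = inverse (chi a d)"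
  using chi_mult[of a d "inverse a" "inverse d"] chi_nz[of a d]
  by (simp add: field_simps)

lemma chi_unit: "vge v (a - 1) lev \<Longrightarrow> vge v (d - 1) lev \<Longrightarrow> a \<noteq> 0 \<Longrightarrow> d \<noteq> 0 \<Longrightarrow> a' \<noteq> 0 \<Longrightarrow> d' \<noteq> 0 \<Longrightarrow>
   chi (a * a') (d * d') = chi a' d'"
  by (simp add: chi_mult chi_lev)

lemma rho_lin: "g \<in> GL2 \<Longrightarrow> Vector_Spaces.linear smul smul (rho g)"
  using rep by (simp add: smooth_rep_def)

lemma rho_add: "g \<in> GL2 \<Longrightarrow> rho g (x + y) = rho g x + rho g y"
  using rho_lin[of g] by (simp add: Vector_Spaces.linear_iff)

lemma rho_smul: "g \<in> GL2 \<Longrightarrow> rho g (smul c x) = smul c (rho g x)"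
  using rho_lin[of g] by (simp add: Vector_Spaces.linear_iff)

lemma rho_additive: "g \<in> GL2 \<Longrightarrow> additive (rho g)"
  by (simp add: additive_def rho_add)

lemma rho_0: "g \<in> GL2 \<Longrightarrow> rho g 0 = 0"
  using additive.zero[OF rho_additive] by blast

lemma rho_diff: "g \<in> GL2 \<Longrightarrow> rho g (x - y) = rho g x - rho g y"
  using additive.diff[OF rho_additive] by blast

lemma rho_sum: "g \<in> GL2 \<Longrightarrow> rho g (sum h A) = (\<Sum>x\<in>A. rho g (h x))"
  using additive.sum[OF rho_additive] by blast

lemma rho_one: "rho (mat 1) x = x"
  using rep by (simp add: smooth_rep_def)

lemma rho_mult: "g \<in> GL2 \<Longrightarrow> h \<in> GL2 \<Longrightarrow> rho (g ** h) x = rho g (rho h x)"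
  using rep by (simp add: smooth_rep_def)

lemma rho_smooth: "\<exists>n\<ge>1. \<forall>k\<in>K n. rho k x = x"
  using rep by (simp add: smooth_rep_def)

lemma K_mono: "m \<le> n \<Longrightarrow> k \<in> K n \<Longrightarrow> k \<in> K m"
  by (auto simp: congr_sub_def intro: vge_mono)

lemma K_GL2: assumes "n \<ge> 1" "k \<in> K n" shows "k \<in> GL2"
proof -
  obtain a b c d where k: "k = mk a b c d" by (rule mk_cases)
  with assms have h: "vge v (a-1) 1" "vge v b 1" "vge v c 1" "vge v (d-1) 1"
    by (auto simp: congr_sub_mk intro: vge_mono)
  have "a*d - b*c = 1 + ((a-1) + (d-1) + (a-1)*(d-1) - b*c)" by (simp add: algebra_simps)
  moreover have "vge v ((a-1) + (d-1) + (a-1)*(d-1) - b*c) 1"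
  proof -
    have t1: "vge v ((a-1)*(d-1)) 1" using vge_mult[OF h(1) h(4)] by (rule vge_mono) simp
    have t2: "vge v (b*c) 1" using vge_mult[OF h(2) h(3)] by (rule vge_mono) simp
    show ?thesis by (rule vge_diff[OF vge_add[OF vge_add[OF h(1) h(4)] t1] t2])
  qed
  ultimately have "a*d - b*c \<noteq> 0" using unit_v(1) by metis
  then show ?thesis using k by simp
qed

lemma Ind_memI:
  assumes "\<And>g. g \<in> GL2 \<Longrightarrow> \<exists>n\<ge>1. \<forall>k\<in>K n. f (g ** k) = f g"
    and "\<And>x. x \<notin> GL2 \<Longrightarrow> f x = 0"
    and "\<And>b g. b \<in> Borel \<Longrightarrow> g \<in> GL2 \<Longrightarrow> f (b ** g) = chi (b $ 1 $ 1) (b $ 2 $ 2) * f g"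
  shows "f \<in> V"
  using assms by (auto simp: Ind_def loc_const_G_def)

lemma Ind_lc: "f \<in> V \<Longrightarrow> g \<in> GL2 \<Longrightarrow> \<exists>n\<ge>1. \<forall>k\<in>K n. f (g ** k) = f g"
  by (auto simp: Ind_def loc_const_G_def)

lemma Ind_zero: "f \<in> V \<Longrightarrow> x \<notin> GL2 \<Longrightarrow> f x = 0"
  by (auto simp: Ind_def)

lemma Ind_borel: "f \<in> V \<Longrightarrow> b \<in> Borel \<Longrightarrow> g \<in> GL2 \<Longrightarrow> f (b ** g) = chi (b $ 1 $ 1) (b $ 2 $ 2) * f g"
  by (auto simp: Ind_def)

lemma Ind_add: assumes "f1 \<in> V" "f2 \<in> V" shows "(\<lambda>x. f1 x + f2 x) \<in> V"
proof (rule Ind_memI)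
  fix g :: "'a^2^2" assume g: "g \<in> GL2"
  obtain n1 where n1: "n1 \<ge> 1" "\<forall>k\<in>K n1. f1 (g ** k) = f1 g" using Ind_lc[OF assms(1) g] by blast
  obtain n2 where n2: "n2 \<ge> 1" "\<forall>k\<in>K n2. f2 (g ** k) = f2 g" using Ind_lc[OF assms(2) g] by blast
  show "\<exists>n\<ge>1. \<forall>k\<in>K n. f1 (g ** k) + f2 (g ** k) = f1 g + f2 g"
  proof (intro exI[of _ "max n1 n2"] conjI ballI)
    fix k assume "k \<in> K (max n1 n2)"
    then have "k \<in> K n1" "k \<in> K n2" using K_mono[of n1 "max n1 n2" k] K_mono[of n2 "max n1 n2" k] by auto
    then show "f1 (g ** k) + f2 (g ** k) = f1 g + f2 g" using n1 n2 by simp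
  qed (use n1 in auto)
qed (use assms in \<open>auto simp: Ind_zero Ind_borel algebra_simps\<close>)

lemma Ind_scale: assumes "f \<in> V" shows "(\<lambda>x. c * f x) \<in> V"
proof (rule Ind_memI)
  fix g :: "'a^2^2" assume g: "g \<in> GL2"
  then show "\<exists>n\<ge>1. \<forall>k\<in>K n. c * f (g ** k) = c * f g" using Ind_lc[OF assms g] by metis
qed (use assms in \<open>auto simp: Ind_zero Ind_borel algebra_simps\<close>)

lemma Ind_0: "(\<lambda>x. 0) \<in> V"
  using Ind_scale[of "\<lambda>x. 0" 0] by (auto intro: Ind_memI)

lemma Ind_diff: assumes "f1 \<in> V" "f2 \<in> V" shows "(\<lambda>x. f1 x - f2 x) \<in> V"
  using Ind_add[OF assms(1) Ind_scale[OF assms(2), of "-1"]] by simp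

lemma Ind_sum: assumes "finite A" "\<And>i. i \<in> A \<Longrightarrow> F i \<in> V" shows "(\<lambda>x. \<Sum>i\<in>A. F i x) \<in> V"
  using assms by (induction A rule: finite_induct) (auto simp: Ind_0 intro: Ind_add)

lemma phi_add: "f1 \<in> V \<Longrightarrow> f2 \<in> V \<Longrightarrow> phi (\<lambda>x. f1 x + f2 x) = phi f1 + phi f2"
  using phi by (simp add: Hom_H_def)

lemma phi_scale: "f \<in> V \<Longrightarrow> phi (\<lambda>x. c * f x) = smul c (phi f)"
  using phi by (simp add: Hom_H_def)

lemma phi_borel: "b \<in> Borel \<Longrightarrow> f \<in> V \<Longrightarrow> phi (rt b f) = rho b (phi f)"
  using phi by (simp add: Hom_H_def)

lemma phi_0: "phi (\<lambda>x. 0) = 0"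
  using phi_scale[OF Ind_0, of 0] by simp

lemma phi_diff: "f1 \<in> V \<Longrightarrow> f2 \<in> V \<Longrightarrow> phi (\<lambda>x. f1 x - f2 x) = phi f1 - phi f2"
proof -
  assume a: "f1 \<in> V" "f2 \<in> V"
  have "phi (\<lambda>x. (f1 x - f2 x) + f2 x) = phi (\<lambda>x. f1 x - f2 x) + phi f2"
    using phi_add[OF Ind_diff[OF a] a(2)] .
  then show ?thesis by simp
qed

lemma phi_sum: assumes "finite A" "\<And>i. i \<in> A \<Longrightarrow> F i \<in> V"
  shows "phi (\<lambda>x. \<Sum>i\<in>A. F i x) = (\<Sum>i\<in>A. phi (F i))"
  using assms
proof (induction A rule: finite_induct)
  case empty then show ?case by (simp add: phi_0)
next
  case (insert a A)
  have "phi (\<lambda>x. \<Sum>i\<in>insert a A. F i x) = phi (\<lambda>x. F a x + (\<Sum>i\<in>A. F i x))"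
    using insert by simp
  also have "\<dots> = phi (F a) + phi (\<lambda>x. \<Sum>i\<in>A. F i x)"
    using insert by (intro phi_add Ind_sum) auto
  finally show ?case using insert by simp
qed


lemma unit_near1: "vge v (a - 1) n \<Longrightarrow> n \<ge> 1 \<Longrightarrow> a \<noteq> 0 \<and> v a = 0"
  using unit_v[of "a - 1"] vge_mono[of "a - 1" n 1] by auto

lemma Ind_c0: assumes "f \<in> V" "a \<noteq> 0" "d \<noteq> 0" shows "f (mk a b 0 d) = chi a d * f (mat 1)"
proof -
  have "f (mk a b 0 d ** mat 1) = chi a d * f (mat 1)"
    using Ind_borel[OF assms(1), of "mk a b 0 d" "mat 1"] assms by simp
  then show ?thesis by simp
qed

lemma Ind_cne: assumes "f \<in> V" "c \<noteq> 0" "a*d - b*c \<noteq> 0"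
  shows "f (mk a b c d) = chi (-(a*d-b*c)/c) c * f (mk 0 1 1 (d/c))"
proof -
  have e: "mk (-(a*d-b*c)/c) a 0 c ** mk 0 1 1 (d/c) = mk a b c d"
    using assms by (simp add: field_simps)
  have "f (mk (-(a*d-b*c)/c) a 0 c ** mk 0 1 1 (d/c)) = chi (-(a*d-b*c)/c) c * f (mk 0 1 1 (d/c))"
    using Ind_borel[OF assms(1), of "mk (-(a*d-b*c)/c) a 0 c" "mk 0 1 1 (d/c)"] assms by simp
  then show ?thesis using e by simp
qed

lemma Ind_mat1_eq: "f \<in> V \<Longrightarrow> b \<in> Borel \<Longrightarrow> f b = chi (b$1$1) (b$2$2) * f (mat 1)"
  using Ind_borel[of f b "mat 1"] by simp

definition bnd :: "'a^2^2 \<Rightarrow> int \<Rightarrow> bool" where "bnd A m \<longleftrightarrow> (\<forall>i j. vge v (A$i$j) m)"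

lemma bnd_mk: "bnd (mk a b c d) m \<longleftrightarrow> vge v a m \<and> vge v b m \<and> vge v c m \<and> vge v d m"
  by (simp add: bnd_def forall_2)

lemma bnd_mult: assumes "bnd A m1" "bnd B m2" shows "bnd (A ** B) (m1 + m2)"
proof -
  obtain a b c d where A: "A = mk a b c d" by (rule mk_cases)
  obtain a' b' c' d' where B: "B = mk a' b' c' d'" by (rule mk_cases)
  show ?thesis using assms unfolding A B by (simp only: mk_mult bnd_mk) (auto intro!: vge_add vge_mult)
qed

lemma bnd_ex: "\<exists>m. bnd A m"
proof -
  obtain a b c d where A: "A = mk a b c d" by (rule mk_cases)
  obtain m1 m2 m3 m4 where "vge v a m1" "vge v b m2" "vge v c m3" "vge v d m4"
    using vge_low by metis
  then show ?thesis unfolding A bnd_mk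
    by (intro exI[of _ "min (min m1 m2) (min m3 m4)"]) (auto elim: vge_mono)
qed

lemma bnd_mono: "bnd A n \<Longrightarrow> m \<le> n \<Longrightarrow> bnd A m"
  by (auto simp: bnd_def intro: vge_mono)

lemma K_bnd: "k \<in> K n \<longleftrightarrow> bnd (k - mat 1) n"
  by (simp add: congr_sub_def bnd_def)

lemma mk_sub: "mk a b c d - mk a' b' c' d' = mk (a-a') (b-b') (c-c') (d-d')"
  by (auto simp: vec_eq_iff forall_2)

lemma matmul_sub_left: fixes A B C :: "('a::field)^2^2" shows "(A - B) ** C = A ** C - B ** C"
proof -
  obtain a b c d where A: "A = mk a b c d" by (rule mk_cases)
  obtain a' b' c' d' where B: "B = mk a' b' c' d'" by (rule mk_cases)
  obtain a'' b'' c'' d'' where C: "C = mk a'' b'' c'' d''" by (rule mk_cases)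
  show ?thesis unfolding A B C by (simp add: mk_sub algebra_simps)
qed

lemma matmul_sub_right: fixes A B C :: "('a::field)^2^2" shows "C ** (A - B) = C ** A - C ** B"
proof -
  obtain a b c d where A: "A = mk a b c d" by (rule mk_cases)
  obtain a' b' c' d' where B: "B = mk a' b' c' d'" by (rule mk_cases)
  obtain a'' b'' c'' d'' where C: "C = mk a'' b'' c'' d''" by (rule mk_cases)
  show ?thesis unfolding A B C by (simp add: mk_sub algebra_simps)
qed

lemma GL2_inv: assumes "h \<in> (GL2 :: (('a::field)^2^2) set)"
  obtains hi where "h ** hi = mat 1" "hi ** h = mat 1" "hi \<in> GL2"
proof -
  obtain a b c d where h: "h = mk a b c d" by (rule mk_cases)
  define D where "D = a*d - b*c"
  have D: "D \<noteq> 0" using assms h by (simp add: D_def)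
  let ?hi = "mk (d/D) (-b/D) (-c/D) (a/D)"
  have q: "(a*d - b*c)/D = 1" using D by (simp add: D_def)
  have e1: "a*(d/D) + b*(-c/D) = 1" "d/D*a + (-b/D)*c = 1" "c*(-b/D) + d*(a/D) = 1" "-c/D*b + a/D*d = 1"
    using q by (simp_all add: field_simps)
  have e2: "a*(-b/D) + b*(a/D) = 0" "c*(d/D) + d*(-c/D) = 0" "d/D*b + (-b/D)*d = 0" "-c/D*a + a/D*c = 0"
    by (simp_all add: field_simps)
  have 1: "h ** ?hi = mat 1" unfolding h mat1_mk mk_mult using e1 e2 by simp
  have 2: "?hi ** h = mat 1" unfolding h mat1_mk mk_mult using e1 e2 by simp
  have "d/D * (a/D) - (-b/D)*(-c/D) = (a*d - b*c)/(D*D)" by (simp add: diff_divide_distrib mult.commute)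
  also have "\<dots> = 1 / D" using D by (simp add: D_def)
  finally have "?hi \<in> GL2" using D by simp
  then show ?thesis using 1 2 that by blast
qed

lemma conj_K: assumes "h \<in> GL2" "h ** hi = mat 1" "hi ** h = mat 1"
  shows "\<exists>N\<ge>1. \<forall>k\<in>K N. hi ** k ** h \<in> K n"
proof -
  obtain m1 where m1: "bnd hi m1" using bnd_ex by blast
  obtain m2 where m2: "bnd h m2" using bnd_ex by blast
  define N where "N = max 1 (n - m1 - m2)"
  show ?thesis
  proof (intro exI[of _ N] conjI ballI)
    fix k assume "k \<in> K N"
    then have "bnd (k - mat 1) N" by (simp add: K_bnd)
    then have "bnd (hi ** (k - mat 1) ** h) (m1 + N + m2)" using m1 m2 by (intro bnd_mult) auto
    moreover have "hi ** (k - mat 1) ** h = hi ** k ** h - mat 1"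
      using assms by (simp add: matmul_sub_left matmul_sub_right)
    ultimately have "bnd (hi ** k ** h - mat 1) (m1 + N + m2)" by simp
    then show "hi ** k ** h \<in> K n" unfolding K_bnd
      by (rule bnd_mono) (simp add: N_def)
  qed (simp add: N_def)
qed

lemma rt_mem: assumes f: "f \<in> V" and h: "h \<in> GL2" shows "rt h f \<in> V"
proof (rule Ind_memI)
  fix g :: "'a^2^2" assume g: "g \<in> GL2"
  obtain hi where hi: "h ** hi = mat 1" "hi ** h = mat 1" "hi \<in> GL2" using GL2_inv[OF h] by blast
  obtain n where n: "n \<ge> 1" "\<forall>k\<in>K n. f (g ** h ** k) = f (g ** h)"
    using Ind_lc[OF f GL2_mult[OF g h]] by blast
  obtain N where N: "N \<ge> 1" "\<forall>k\<in>K N. hi ** k ** h \<in> K n" using conj_K[OF h hi(1,2)] by blast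
  show "\<exists>n\<ge>1. \<forall>k\<in>K n. rt h f (g ** k) = rt h f g"
  proof (intro exI[of _ N] conjI ballI)
    fix k assume k: "k \<in> K N"
    have kg: "k \<in> GL2" using K_GL2 N(1) k by blast
    have "g ** k ** h = g ** h ** (hi ** k ** h)"
      by (simp add: matrix_mul_assoc) (metis hi(1) matrix_mul_assoc matrix_mul_lid)
    then have "f (g ** k ** h) = f (g ** h)" using n N k by simp
    then show "rt h f (g ** k) = rt h f g" using g kg by (simp add: right_transl_def GL2_mult)
  qed (use N in auto)
next
  fix x :: "'a^2^2" assume "x \<notin> GL2" then show "rt h f x = 0" by (simp add: right_transl_def)
next
  fix b g :: "'a^2^2" assume b: "b \<in> Borel" and g: "g \<in> GL2"
  have "f (b ** g ** h) = chi (b $ 1 $ 1) (b $ 2 $ 2) * f (g ** h)"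
    using Ind_borel[OF f b GL2_mult[OF g h]] by (simp add: matrix_mul_assoc)
  then show "rt h f (b ** g) = chi (b $ 1 $ 1) (b $ 2 $ 2) * rt h f g"
    using b g h by (simp add: right_transl_def GL2_mult Borel_GL2)
qed

lemma rt_one: "f \<in> V \<Longrightarrow> rt (mat 1) f = f"
  by (auto simp: right_transl_def fun_eq_iff Ind_zero)

lemma rt_linear_add: fixes f1 f2 :: "'a^2^2 \<Rightarrow> 'k" shows "rt h (\<lambda>x. f1 x + f2 x) = (\<lambda>x. rt h f1 x + rt h f2 x)"
  by (auto simp: right_transl_def fun_eq_iff)

lemma rt_linear_scale: fixes f :: "'a^2^2 \<Rightarrow> 'k" shows "rt h (\<lambda>x. c * f x) = (\<lambda>x. c * rt h f x)"
  by (auto simp: right_transl_def fun_eq_iff)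

lemma rt_linear_diff: fixes f1 f2 :: "'a^2^2 \<Rightarrow> 'k" shows "rt h (\<lambda>x. f1 x - f2 x) = (\<lambda>x. rt h f1 x - rt h f2 x)"
  by (auto simp: right_transl_def fun_eq_iff)

lemma rt_linear_sum: fixes F :: "_ \<Rightarrow> 'a^2^2 \<Rightarrow> 'k" shows "rt h (\<lambda>x. \<Sum>i\<in>A. F i x) = (\<lambda>x. \<Sum>i\<in>A. rt h (F i) x)"
  by (auto simp: right_transl_def fun_eq_iff)


definition E :: "int \<Rightarrow> 'a^2^2 \<Rightarrow> 'k" where
  "E k g = (if g \<in> GL2 \<and> g$2$1 \<noteq> 0 \<and> vge v (g$2$2 / g$2$1) k then chi (-(det g) / g$2$1) (g$2$1) else 0)"

lemma E_mk: "E k (mk a b c d) = (if a*d - b*c \<noteq> 0 \<and> c \<noteq> 0 \<and> vge v (d/c) k then chi (-(a*d-b*c)/c) c else 0)"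
  by (simp add: E_def)

lemma E_borel_inv:
  assumes g: "g \<in> GL2" and al: "vge v (al - 1) lev" and de: "vge v (de - 1) lev" and be: "vge v be k"
  shows "E k (g ** mk al be 0 de) = E k g"
proof -
  obtain a b c d where gd: "g = mk a b c d" by (rule mk_cases)
  have D: "a*d - b*c \<noteq> 0" using g gd by simp
  have ua: "al \<noteq> 0" "v al = 0" using unit_near1[OF al lev] by auto
  have ud: "de \<noteq> 0" "v de = 0" using unit_near1[OF de lev] by auto
  have prod: "g ** mk al be 0 de = mk (a*al) (a*be + b*de) (c*al) (c*be + d*de)" by (simp add: gd)
  have det: "(a*al)*(c*be + d*de) - (a*be + b*de)*(c*al) = (a*d - b*c) * (al*de)" by (simp add: algebra_simps)
  show ?thesis
  proof (cases "c = 0")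
    case True then show ?thesis by (simp add: prod gd E_mk)
  next
    case False
    have r: "(c*be + d*de)/(c*al) = (be + (d/c)*de)/al" using False ua by (simp add: field_simps)
    have "vge v ((be + (d/c)*de)/al) k \<longleftrightarrow> vge v (be + (d/c)*de) k" using ua by (rule vge_div_v0)
    also have "\<dots> \<longleftrightarrow> vge v ((d/c)*de) k"
      using be vge_add[of be k "d/c*de"] vge_diff[of "be + d/c*de" k be] by auto
    also have "\<dots> \<longleftrightarrow> vge v (d/c) k" using ud by (rule vge_mult_v0)
    finally have cond: "vge v ((c*be + d*de)/(c*al)) k \<longleftrightarrow> vge v (d/c) k" using r by simp
    have q1: "-((a*d - b*c)*(al*de))/(c*al) = de * (-(a*d-b*c)/c)" using False ua by (simp add: field_simps)
    have "chi (-((a*d - b*c)*(al*de))/(c*al)) (c*al) = chi (de * (-(a*d-b*c)/c)) (al * c)"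
      unfolding q1 by (simp add: mult.commute)
    also have "\<dots> = chi (-(a*d-b*c)/c) c"
      by (rule chi_unit[OF de al]) (use False D ua ud in auto)
    finally have ch: "chi (-((a*d - b*c)*(al*de))/(c*al)) (c*al) = chi (-(a*d-b*c)/c) c" .
    show ?thesis unfolding prod E_mk det unfolding gd E_mk using False D ua ud cond ch by simp
  qed
qed

lemma E_L_inv:
  assumes g: "g \<in> GL2" and y: "vge v y (lev - k)"
  shows "E k (g ** Lm y) = E k g"
proof -
  obtain a b c d where gd: "g = mk a b c d" by (rule mk_cases)
  have D: "a*d - b*c \<noteq> 0" using g gd by simp
  have prod: "g ** Lm y = mk (a + b*y) b (c + d*y) d" by (simp add: gd Lm_def)
  have det: "(a + b*y)*d - b*(c + d*y) = a*d - b*c" by (simp add: algebra_simps)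
  show ?thesis
  proof (cases "c \<noteq> 0 \<and> vge v (d/c) k")
    case True
    define e where "e = (d/c)*y"
    have e: "vge v e 1" using vge_mult[of "d/c" k y "lev - k"] True y lev unfolding e_def
      by (auto intro: vge_mono)
    have e': "vge v e lev" using vge_mult[of "d/c" k y "lev - k"] True y unfolding e_def by simp
    have u: "1 + e \<noteq> 0" "v (1 + e) = 0" using unit_v[OF e] by auto
    have c': "c + d*y = c * (1 + e)" using True by (simp add: e_def field_simps)
    have c'ne: "c + d*y \<noteq> 0" using c' True u by simp
    have q: "d/(c + d*y) = (d/c) / (1 + e)" unfolding c' by simp
    have cond: "vge v (d/(c + d*y)) k" unfolding q vge_div_v0[OF u] using True by simp
    have i1: "vge v (inverse (1 + e) - 1) lev"
    proof -
      have "inverse (1 + e) - 1 = - e / (1 + e)" using u by (simp add: field_simps)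
      then show ?thesis using vge_div_v0[OF u, of "-e" lev] e' by simp
    qed
    have i2: "vge v ((1 + e) - 1) lev" using e' by simp
    have "chi (-(a*d-b*c)/(c + d*y)) (c + d*y) = chi (inverse (1 + e) * (-(a*d-b*c)/c)) ((1+e) * c)"
      using c' u True by (simp add: field_simps)
    also have "\<dots> = chi (-(a*d-b*c)/c) c"
      by (rule chi_unit[OF i1 i2]) (use u True D in auto)
    finally show ?thesis unfolding prod E_mk det unfolding gd E_mk using True D c'ne cond by simp
  next
    case False
    have "\<not> (c + d*y \<noteq> 0 \<and> vge v (d/(c + d*y)) k)"
    proof
      assume A: "c + d*y \<noteq> 0 \<and> vge v (d/(c + d*y)) k"
      show False
      proof (cases "c = 0")
        case True
        then have yne: "y \<noteq> 0" "d \<noteq> 0" using A by auto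
        have "d/(c + d*y) = inverse y" using True yne by (simp add: field_simps)
        then have "k \<le> - v y" using A yne by (simp add: vge_iff v_inverse)
        moreover have "lev - k \<le> v y" using y yne by (simp add: vge_iff)
        ultimately show False using lev by simp
      next
        case cne: False
        then have nv: "\<not> vge v (d/c) k" using False by simp
        then have dne: "d \<noteq> 0" by (auto simp: vge_def)
        have q: "d/(c + d*y) = inverse (c/d + y)" using dne by (simp add: field_simps)
        have s0: "c/d + y \<noteq> 0"
        proof
          assume "c/d + y = 0" then have "c + d*y = 0" using dne by (simp add: field_simps)
          then show False using A by simp
        qed
        have "vge v (inverse (c/d + y)) k" using A q by simp
        then have k1: "k \<le> - v (c/d + y)" using s0 by (simp add: vge_iff v_inverse)
        have "v (d/c) < k" using nv cne dne by (simp add: vge_iff)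
        then have "vge v (c/d) (1 - k)" using cne dne by (simp add: vge_iff v_divide)
        moreover have "vge v y (1 - k)" using vge_mono[OF y, of "1 - k"] lev by simp
        ultimately have "vge v (c/d + y) (1 - k)" by (rule vge_add)
        then show False using k1 s0 by (simp add: vge_iff)
      qed
    qed
    then show ?thesis unfolding prod E_mk det unfolding gd E_mk using False by auto
  qed
qed

lemma E_borel_eq: assumes b: "b \<in> Borel" and g: "g \<in> GL2"
  shows "E k (b ** g) = chi (b $ 1 $ 1) (b $ 2 $ 2) * E k g"
proof -
  obtain al be c0 de where bd: "b = mk al be c0 de" by (rule mk_cases)
  have c0: "c0 = 0" "al \<noteq> 0" "de \<noteq> 0" using b bd by auto
  obtain a' b' c' d' where gd: "g = mk a' b' c' d'" by (rule mk_cases)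
  have D: "a'*d' - b'*c' \<noteq> 0" using g gd by simp
  have prod: "b ** g = mk (al*a' + be*c') (al*b' + be*d') (de*c') (de*d')" by (simp add: bd gd c0)
  have det: "(al*a' + be*c')*(de*d') - (al*b' + be*d')*(de*c') = (al*de)*(a'*d' - b'*c')"
    by (simp add: algebra_simps)
  show ?thesis
  proof (cases "c' = 0")
    case True then show ?thesis using c0 by (simp add: prod gd E_mk bd)
  next
    case False
    have r: "de*d'/(de*c') = d'/c'" using c0 by simp
    have q1: "-((al*de)*(a'*d' - b'*c'))/(de*c') = al * (-(a'*d' - b'*c')/c')" using c0 False by (simp add: field_simps)
    have "chi (-((al*de)*(a'*d' - b'*c'))/(de*c')) (de*c') = chi (al * (-(a'*d' - b'*c')/c')) (de * c')"
      unfolding q1 ..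
    also have "\<dots> = chi al de * chi (-(a'*d' - b'*c')/c') c'"
      by (rule chi_mult) (use c0 False D in auto)
    finally show ?thesis unfolding prod E_mk det unfolding bd gd E_mk using False c0 D r by simp
  qed
qed

lemma K_factor: assumes "n \<ge> 1" "mk a b c d \<in> K n"
  shows "mk a b c d = Lm (c/a) ** mk a b 0 (d - c*b/a)" "a \<noteq> 0"
    "vge v (a - 1) n" "vge v b n" "vge v (c/a) n" "vge v ((d - c*b/a) - 1) n"
proof -
  have h: "vge v (a-1) n" "vge v b n" "vge v c n" "vge v (d-1) n" using assms by (auto simp: congr_sub_mk)
  have ua: "a \<noteq> 0" "v a = 0" using unit_near1[OF h(1) assms(1)] by auto
  show "a \<noteq> 0" "vge v (a - 1) n" "vge v b n" using ua h by auto
  show "mk a b c d = Lm (c/a) ** mk a b 0 (d - c*b/a)" using ua by (simp add: Lm_def field_simps)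
  show "vge v (c/a) n" using h ua by (simp add: vge_div_v0)
  have "vge v (c*b/a) (n + n)" using vge_mult[OF h(3) h(2)] ua by (simp add: vge_div_v0)
  then have "vge v (c*b/a) n" by (rule vge_mono) (use assms in simp)
  have eq: "(d - c*b/a) - 1 = (d - 1) - c*b/a" by simp
  show "vge v ((d - c*b/a) - 1) n" unfolding eq by (rule vge_diff[OF h(4)]) fact
qed

lemma E_mem: "E k \<in> V"
proof (rule Ind_memI)
  fix g :: "'a^2^2" assume g: "g \<in> GL2"
  define N where "N = max 1 (max k (max lev (lev - k)))"
  show "\<exists>n\<ge>1. \<forall>\<kappa>\<in>K n. E k (g ** \<kappa>) = E k g"
  proof (intro exI[of _ N] conjI ballI)
    fix \<kappa> assume ka: "\<kappa> \<in> K N"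
    obtain a b c d where kd: "\<kappa> = mk a b c d" by (rule mk_cases)
    have N1: "N \<ge> 1" by (simp add: N_def)
    note F = K_factor[OF N1 ka[unfolded kd]]
    have gL: "g ** Lm (c/a) \<in> GL2" by (rule GL2_mult[OF g]) (simp add: Lm_def)
    have "E k (g ** \<kappa>) = E k ((g ** Lm (c/a)) ** mk a b 0 (d - c*b/a))"
      using F(1) kd by (simp add: matrix_mul_assoc)
    also have "\<dots> = E k (g ** Lm (c/a))"
      by (rule E_borel_inv[OF gL]) (use F in \<open>auto intro: vge_mono simp: N_def\<close>)
    also have "\<dots> = E k g"
      by (rule E_L_inv[OF g]) (use F in \<open>auto intro: vge_mono simp: N_def\<close>)
    finally show "E k (g ** \<kappa>) = E k g" .
  qed (simp add: N_def)
next
  fix x :: "'a^2^2" assume "x \<notin> GL2" then show "E k x = 0" by (simp add: E_def)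
next
  fix b g :: "'a^2^2" assume "b \<in> Borel" "g \<in> GL2" then show "E k (b ** g) = chi (b $ 1 $ 1) (b $ 2 $ 2) * E k g"
    by (rule E_borel_eq)
qed


lemma vge_pw_left: "vge v (pw n * x) m \<longleftrightarrow> vge v x (m - n)"
  using vge_pw_mult[of x n m] by (simp add: mult.commute)

lemma finite_mono_choice:
  assumes "finite A" "\<forall>r\<in>A. \<exists>k::int. P r k" "\<forall>r k k'. P r k \<longrightarrow> k \<le> k' \<longrightarrow> P r k'"
  shows "\<exists>K. \<forall>r\<in>A. P r K"
  using assms(1,2)
proof (induction A rule: finite_induct)
  case empty then show ?case by simp
next
  case (insert x F)
  then obtain K where K: "\<forall>r\<in>F. P r K" by auto
  obtain k where k: "P x k" using insert by auto
  have 1: "P x (max K k)" using assms(3) k by simp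
  have 2: "\<forall>r\<in>F. P r (max K k)" using K assms(3) by (meson max.cobounded1)
  show ?case using 1 2 by (intro exI[of _ "max K k"]) simp
qed

lemma O_rep: "vge v (x - c) j \<Longrightarrow> \<exists>r\<in>R0. vge v (x - c - pw j * r) (j + 1)"
proof -
  assume a: "vge v (x - c) j"
  have "vge v ((x - c) / pw j) 0" using a by (simp add: vge_div_iff)
  then obtain r where r: "r \<in> R0" "vge v ((x - c) / pw j - r) 1" using R0(3) by blast
  have "(x - c) / pw j - r = (x - c - pw j * r) / pw j" by (simp add: field_simps)
  then have "vge v (x - c - pw j * r) (j + 1)" using r(2) by (simp add: vge_div_iff add.commute)
  then show ?thesis using r(1) by blast
qed

lemma unif_const:
  fixes h :: "'a \<Rightarrow> 'b"
  assumes lc: "\<forall>x. \<exists>n. \<forall>y. vge v (y - x) n \<longrightarrow> h y = h x"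
  shows "\<exists>k. \<forall>x y. vge v x a \<longrightarrow> vge v (y - x) k \<longrightarrow> h y = h x"
proof (rule ccontr)
  define Bad where "Bad c j \<longleftrightarrow> (\<forall>k. \<exists>x y. vge v (x - c) j \<and> vge v (y - x) k \<and> h y \<noteq> h x)" for c j
  assume "\<not> ?thesis"
  then have B0: "Bad 0 a" unfolding Bad_def by auto
  have step: "\<exists>r\<in>R0. Bad (c + pw j * r) (j + 1)" if B: "Bad c j" for c j
  proof (rule ccontr)
    assume "\<not> ?thesis"
    then have "\<forall>r\<in>R0. \<exists>k. \<forall>x y. vge v (x - (c + pw j * r)) (j + 1) \<longrightarrow> vge v (y - x) k \<longrightarrow> h y = h x"
      unfolding Bad_def by blast
    note pre = this
    define Q where "Q r k \<longleftrightarrow> (\<forall>x y. vge v (x - (c + pw j * r)) (j + 1) \<longrightarrow> vge v (y - x) k \<longrightarrow> h y = h x)" for r k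
    have mono: "\<forall>r k k'. Q r k \<longrightarrow> k \<le> k' \<longrightarrow> Q r k'" unfolding Q_def using vge_mono by blast
    have ex: "\<forall>r\<in>R0. \<exists>k. Q r k" using pre unfolding Q_def by blast
    obtain K where K0: "\<forall>r\<in>R0. Q r K" using finite_mono_choice[OF R0(1) ex mono] by blast
    then have K: "\<forall>r\<in>R0. \<forall>x y. vge v (x - (c + pw j * r)) (j + 1) \<longrightarrow> vge v (y - x) K \<longrightarrow> h y = h x"
      unfolding Q_def by blast
    obtain x y where xy: "vge v (x - c) j" "vge v (y - x) K" "h y \<noteq> h x" using B unfolding Bad_def by blast
    obtain r where r: "r \<in> R0" "vge v (x - c - pw j * r) (j + 1)" using O_rep[OF xy(1)] by blast
    have "x - (c + pw j * r) = x - c - pw j * r" by simp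
    then show False using K r xy by metis
  qed
  define rr where "rr c j = (SOME r. r \<in> R0 \<and> Bad (c + pw j * r) (j + 1))" for c j
  have rr: "rr c j \<in> R0 \<and> Bad (c + pw j * rr c j) (j + 1)" if "Bad c j" for c j
  proof -
    have "\<exists>r. r \<in> R0 \<and> Bad (c + pw j * r) (j + 1)" using step[OF that] by blast
    then show ?thesis unfolding rr_def by (rule someI_ex)
  qed
  define cs where "cs = rec_nat (0::'a) (\<lambda>n c. c + pw (a + int n) * rr c (a + int n))"
  have cs0: "cs 0 = 0" and csS: "cs (Suc n) = cs n + pw (a + int n) * rr (cs n) (a + int n)" for n
    by (simp_all add: cs_def)
  have badn: "Bad (cs n) (a + int n)" for n
  proof (induction n)
    case 0 then show ?case using B0 by (simp add: cs0)
  next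
    case (Suc n)
    have "a + int (Suc n) = a + int n + 1" by simp
    then show ?case using rr[OF Suc] by (simp only: csS)
  qed
  have inc: "vge v (cs (Suc n) - cs n) (a + int n)" for n
  proof -
    have "rr (cs n) (a + int n) \<in> R0" using rr[OF badn] by blast
    then have "vge v (rr (cs n) (a + int n)) 0" by (rule R0(2))
    then have "vge v (pw (a + int n) * rr (cs n) (a + int n)) (a + int n)"
      by (simp add: vge_pw_left)
    then show ?thesis by (simp add: csS)
  qed
  have cauchy1: "vge v (cs i - cs j) (a + int j)" if "j \<le> i" for i j
    using that
  proof (induction i)
    case 0 then show ?case by simp
  next
    case (Suc i)
    show ?case
    proof (cases "j = Suc i")
      case False
      then have "j \<le> i" using Suc by simp
      then have "vge v (cs i - cs j) (a + int j)" using Suc by simp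
      moreover have "vge v (cs (Suc i) - cs i) (a + int j)" using vge_mono[OF inc[of i], of "a + int j"] \<open>j \<le> i\<close> by simp
      ultimately have "vge v ((cs (Suc i) - cs i) + (cs i - cs j)) (a + int j)" by (intro vge_add)
      then show ?thesis by simp
    qed simp
  qed
  have "\<forall>n. \<exists>N. \<forall>i\<ge>N. \<forall>j\<ge>N. vge v (cs i - cs j) n"
  proof
    fix n
    show "\<exists>N. \<forall>i\<ge>N. \<forall>j\<ge>N. vge v (cs i - cs j) n"
    proof (intro exI[of _ "nat (n - a)"] allI impI)
      fix i j assume ij: "nat (n - a) \<le> i" "nat (n - a) \<le> j"
      show "vge v (cs i - cs j) n"
      proof (cases "j \<le> i")
        case True then show ?thesis using vge_mono[OF cauchy1[OF True], of n] ij by simp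
      next
        case False
        then have "vge v (cs j - cs i) (a + int i)" using cauchy1 by simp
        then show ?thesis using ij vge_mono[of "cs j - cs i" "a + int i" n] by (simp add: vge_commute_diff[of "cs i"])
      qed
    qed
  qed
  then obtain L where L: "\<forall>n. \<exists>N. \<forall>i\<ge>N. vge v (cs i - L) n" using complete by blast
  obtain n0 where n0: "\<forall>y. vge v (y - L) n0 \<longrightarrow> h y = h L" using lc by blast
  obtain N where N: "\<forall>i\<ge>N. vge v (cs i - L) n0" using L by blast
  define i where "i = max N (nat (n0 - a))"
  have ci: "vge v (cs i - L) n0" using N by (simp add: i_def)
  have ai: "n0 \<le> a + int i" by (simp add: i_def)
  obtain x y where xy: "vge v (x - cs i) (a + int i)" "vge v (y - x) n0" "h y \<noteq> h x"
    using badn[of i] unfolding Bad_def by blast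
  have x: "vge v (x - L) n0" using vge_add[OF vge_mono[OF xy(1) ai] ci] by simp
  have y: "vge v (y - L) n0" using vge_add[OF xy(2) x] by simp
  show False using n0 x y xy(3) by metis
qed

lemma rep_cover: "\<exists>C. finite C \<and> (\<forall>c\<in>C. vge v c a) \<and> (\<forall>x. vge v x a \<longrightarrow> (\<exists>c\<in>C. vge v (x - c) (a + int n)))"
proof (induction n)
  case 0 then show ?case by (intro exI[of _ "{0}"]) auto
next
  case (Suc n)
  then obtain C where C: "finite C" "\<forall>c\<in>C. vge v c a" "\<forall>x. vge v x a \<longrightarrow> (\<exists>c\<in>C. vge v (x - c) (a + int n))"
    by blast
  define C' where "C' = (\<lambda>(c, r). c + pw (a + int n) * r) ` (C \<times> R0)"
  have "finite C'" using C(1) R0(1) by (simp add: C'_def)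
  moreover have "\<forall>c\<in>C'. vge v c a"
  proof
    fix c' assume "c' \<in> C'"
    then obtain c r where cr: "c \<in> C" "r \<in> R0" "c' = c + pw (a + int n) * r" by (auto simp: C'_def)
    have "vge v (pw (a + int n) * r) (a + int n)" using R0(2)[OF cr(2)] by (simp add: vge_pw_left)
    then have "vge v (pw (a + int n) * r) a" by (rule vge_mono) simp
    then show "vge v c' a" using C(2) cr by (simp add: vge_add)
  qed
  moreover have "\<forall>x. vge v x a \<longrightarrow> (\<exists>c\<in>C'. vge v (x - c) (a + int (Suc n)))"
  proof (intro allI impI)
    fix x assume "vge v x a"
    then obtain c where c: "c \<in> C" "vge v (x - c) (a + int n)" using C(3) by blast
    obtain r where r: "r \<in> R0" "vge v (x - c - pw (a + int n) * r) (a + int n + 1)" using O_rep[OF c(2)] by blast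
    have "c + pw (a + int n) * r \<in> C'" using c r by (auto simp: C'_def)
    moreover have "vge v (x - (c + pw (a + int n) * r)) (a + int (Suc n))"
      using r(2) by (simp add: diff_diff_eq add_ac)
    ultimately show "\<exists>c\<in>C'. vge v (x - c) (a + int (Suc n))" by blast
  qed
  ultimately show ?case by blast
qed

lemma rep_sys: assumes "a \<le> b"
  shows "\<exists>R. finite R \<and> (\<forall>c\<in>R. vge v c a) \<and> (\<forall>x. vge v x a \<longrightarrow> (\<exists>!c. c \<in> R \<and> vge v (x - c) b))"
proof -
  obtain C where C: "finite C" "\<forall>c\<in>C. vge v c a" "\<forall>x. vge v x a \<longrightarrow> (\<exists>c\<in>C. vge v (x - c) (a + int (nat (b - a))))"
    using rep_cover[of a "nat (b - a)"] by (elim exE conjE) auto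
  have C3: "\<forall>x. vge v x a \<longrightarrow> (\<exists>c\<in>C. vge v (x - c) b)" using C(3) assms by simp
  define sel where "sel x = (SOME c. c \<in> C \<and> vge v (x - c) b)" for x
  have sel: "sel x \<in> C \<and> vge v (x - sel x) b" if "vge v x a" for x
    unfolding sel_def by (rule someI_ex) (use C3 that in blast)
  define R where "R = sel ` C"
  have "finite R" using C(1) by (simp add: R_def)
  moreover have "\<forall>c\<in>R. vge v c a" using sel C(2) by (auto simp: R_def)
  moreover have "\<forall>x. vge v x a \<longrightarrow> (\<exists>!c. c \<in> R \<and> vge v (x - c) b)"
  proof (intro allI impI)
    fix x assume x: "vge v x a"
    obtain c where c: "c \<in> C" "vge v (x - c) b" using C3 x by blast
    have sc: "sel c \<in> C \<and> vge v (c - sel c) b" using sel C(2) c(1) by blast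
    have ex: "sel c \<in> R \<and> vge v (x - sel c) b"
    proof
      show "sel c \<in> R" using c(1) by (simp add: R_def)
      show "vge v (x - sel c) b" using vge_trans[of x c b "sel c"] sc c(2) by blast
    qed
    have uniq: "c' = sel c" if cR: "c' \<in> R" and xc: "vge v (x - c') b" for c'
    proof -
      obtain c'' where c'': "c'' \<in> C" "c' = sel c''" using cR unfolding R_def by blast
      have s2: "vge v (c'' - sel c'') b" using sel C(2) c''(1) by blast
      have "vge v (c'' - c) b"
      proof -
        have eq: "c'' - c = (c'' - c') + ((x - c) - (x - c'))" by simp
        have h1: "vge v (c'' - c') b" using s2 c''(2) by simp
        have "vge v ((c'' - c') + ((x - c) - (x - c'))) b" by (rule vge_add[OF h1 vge_diff[OF c(2) xc]])
        then show ?thesis by (subst eq)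
      qed
      then have "vge v (c'' - z) b \<longleftrightarrow> vge v (c - z) b" for z
      proof -
        assume cc: "vge v (c'' - c) b"
        have e1: "c - z = (c'' - z) - (c'' - c)" by simp
        have e2: "c'' - z = (c - z) + (c'' - c)" by simp
        show "vge v (c'' - z) b \<longleftrightarrow> vge v (c - z) b"
        proof
          assume "vge v (c'' - z) b"
          then have "vge v ((c'' - z) - (c'' - c)) b" using cc by (rule vge_diff)
          then show "vge v (c - z) b" by (subst e1)
        next
          assume "vge v (c - z) b"
          then have "vge v ((c - z) + (c'' - c)) b" using cc by (rule vge_add)
          then show "vge v (c'' - z) b" by (subst e2)
        qed
      qed
      then have eq: "(\<lambda>z. z \<in> C \<and> vge v (c'' - z) b) = (\<lambda>z. z \<in> C \<and> vge v (c - z) b)" by simp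
      show ?thesis using c''(2) unfolding sel_def eq by simp
    qed
    show "\<exists>!c. c \<in> R \<and> vge v (x - c) b" using ex uniq by blast
  qed
  ultimately show ?thesis by blast
qed

end




lemma sum_single: assumes "finite I" "i0 \<in> I" "\<forall>i\<in>I. P i \<longleftrightarrow> i = i0"
  shows "(\<Sum>i\<in>I. if P i then h i else (0::'b::comm_monoid_add)) = h i0"
proof -
  have "(\<Sum>i\<in>I. if P i then h i else 0) = (\<Sum>i\<in>I. if i = i0 then h i else 0)"
    using assms(3) by (intro sum.cong) auto
  also have "\<dots> = h i0" using assms(1,2) by simp
  finally show ?thesis .
qed

context setting begin

interpretation VS: vector_space smul
  using rep by (simp add: smooth_rep_def)

lemma E_w: "E k (mk 0 1 1 x) = (if vge v x k then 1 else 0)"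
  by (simp add: E_mk)

lemma E_c0: "E k (mk a b 0 d) = 0"
  by (simp add: E_mk)

lemma E_1: "E k (mat 1) = 0"
  by (simp add: E_mk mat1_mk)

lemma decomp:
  assumes f: "f \<in> V" and f1: "f (mat 1) = 0" and I: "finite I" and ab: "a \<le> b"
    and ra: "\<forall>i\<in>I. vge v (r i) a" and uniq: "\<forall>x. vge v x a \<longrightarrow> (\<exists>!i. i \<in> I \<and> vge v (x - r i) b)"
    and van: "\<forall>x. \<not> vge v x a \<longrightarrow> f (mk 0 1 1 x) = 0"
    and per: "\<forall>x y. vge v (x - y) b \<longrightarrow> f (mk 0 1 1 x) = f (mk 0 1 1 y)"
  shows "f = (\<lambda>g. \<Sum>i\<in>I. f (mk 0 1 1 (r i)) * rt (Um (- r i)) (E b) g)"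
proof
  fix g :: "'a^2^2"
  show "f g = (\<Sum>i\<in>I. f (mk 0 1 1 (r i)) * rt (Um (- r i)) (E b) g)"
  proof (cases "g \<in> GL2")
    case False
    then show ?thesis using Ind_zero[OF f False] by (simp add: right_transl_def)
  next
    case True
    obtain a' b' c d where gd: "g = mk a' b' c d" by (rule mk_cases)
    have D: "a'*d - b'*c \<noteq> 0" using True gd by simp
    have rtv: "rt (Um (- r i)) (E b) g = E b (mk a' (b' - a' * r i) c (d - c * r i))" for i
      using True by (simp add: right_transl_def gd Um_def algebra_simps)
    show ?thesis
    proof (cases "c = 0")
      case True
      then have "f g = 0" using Ind_c0[OF f] D f1 gd by simp
      moreover have "rt (Um (- r i)) (E b) g = 0" for i using True rtv by (simp add: E_c0)
      ultimately show ?thesis by simp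
    next
      case False
      define x where "x = d / c"
      have fg: "f g = chi (-(a'*d-b'*c)/c) c * f (mk 0 1 1 x)"
        unfolding gd x_def by (rule Ind_cne[OF f False D])
      have det: "a' * (d - c * r i) - (b' - a' * r i) * c = a'*d - b'*c" for i by (simp add: algebra_simps)
      have rat: "(d - c * r i) / c = x - r i" for i using False by (simp add: x_def field_simps)
      have trm: "f (mk 0 1 1 (r i)) * rt (Um (- r i)) (E b) g =
          (if vge v (x - r i) b then chi (-(a'*d-b'*c)/c) c * f (mk 0 1 1 (r i)) else 0)" for i
        unfolding rtv E_mk det rat using D False by simp
      show ?thesis
      proof (cases "vge v x a")
        case True
        then obtain i0 where i0: "i0 \<in> I" "vge v (x - r i0) b" "\<forall>i. i \<in> I \<and> vge v (x - r i) b \<longrightarrow> i = i0"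
          using uniq by metis
        have "(\<Sum>i\<in>I. f (mk 0 1 1 (r i)) * rt (Um (- r i)) (E b) g) = chi (-(a'*d-b'*c)/c) c * f (mk 0 1 1 (r i0))"
          unfolding trm by (rule sum_single[OF I i0(1)]) (use i0 in blast)
        also have "\<dots> = f g" using fg per i0(2) by simp
        finally show ?thesis by simp
      next
        case nx: False
        have "\<not> vge v (x - r i) b" if "i \<in> I" for i
        proof
          assume "vge v (x - r i) b"
          then have "vge v (x - r i) a" using ab by (rule vge_mono)
          then have "vge v ((x - r i) + r i) a" using ra that by (intro vge_add) auto
          then show False using nx by simp
        qed
        then have "(\<Sum>i\<in>I. f (mk 0 1 1 (r i)) * rt (Um (- r i)) (E b) g) = 0" unfolding trm by simp
        moreover have "f g = 0" using fg van nx by simp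
        ultimately show ?thesis by simp
      qed
    qed
  qed
qed


lemma S_struct:
  assumes f: "f \<in> V" and f1: "f (mat 1) = 0"
  shows "\<exists>a k0. a \<le> k0 \<and> (\<forall>x. \<not> vge v x a \<longrightarrow> f (mk 0 1 1 x) = 0) \<and>
           (\<forall>x y. vge v (x - y) k0 \<longrightarrow> f (mk 0 1 1 x) = f (mk 0 1 1 y))"
proof -
  obtain n where n: "n \<ge> 1" "\<forall>\<kappa>\<in>K n. f (mat 1 ** \<kappa>) = f (mat 1)" using Ind_lc[OF f mat1_GL2] by blast
  define a where "a = 1 - n"
  have van: "\<forall>x. \<not> vge v x a \<longrightarrow> f (mk 0 1 1 x) = 0"
  proof (intro allI impI)
    fix x assume nx: "\<not> vge v x a"
    then have x0: "x \<noteq> 0" by auto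
    have vx: "v x < a" using nx x0 by (simp add: vge_iff)
    have eq: "mk 0 1 1 x = mk (-1/x) 1 0 x ** Lm (1/x)" using x0 by (simp add: Lm_def)
    have "Lm (1/x) \<in> K n" using x0 vx by (simp add: Lm_def congr_sub_mk vge_iff v_divide a_def)
    then have "f (Lm (1/x)) = 0" using n f1 by simp
    moreover have "f (mk (-1/x) 1 0 x ** Lm (1/x)) = chi (-1/x) x * f (Lm (1/x))"
      using Ind_borel[OF f, of "mk (-1/x) 1 0 x" "Lm (1/x)"] x0 by (simp add: Lm_def)
    ultimately show "f (mk 0 1 1 x) = 0" using eq by simp
  qed
  have lc: "\<forall>x. \<exists>n. \<forall>y. vge v (y - x) n \<longrightarrow> f (mk 0 1 1 y) = f (mk 0 1 1 x)"
  proof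
    fix x
    obtain m where m: "m \<ge> 1" "\<forall>\<kappa>\<in>K m. f (mk 0 1 1 x ** \<kappa>) = f (mk 0 1 1 x)"
      using Ind_lc[OF f, of "mk 0 1 1 x"] by auto
    show "\<exists>n. \<forall>y. vge v (y - x) n \<longrightarrow> f (mk 0 1 1 y) = f (mk 0 1 1 x)"
    proof (intro exI[of _ m] allI impI)
      fix y assume "vge v (y - x) m"
      then have "Um (y - x) \<in> K m" by (simp add: Um_def congr_sub_mk)
      moreover have "mk 0 1 1 x ** Um (y - x) = mk 0 1 1 y" by (simp add: Um_def)
      ultimately show "f (mk 0 1 1 y) = f (mk 0 1 1 x)" using m(2) by force
    qed
  qed
  obtain k where k: "\<forall>x y. vge v x a \<longrightarrow> vge v (y - x) k \<longrightarrow> f (mk 0 1 1 y) = f (mk 0 1 1 x)"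
    using unif_const[OF lc] by blast
  define k0 where "k0 = max k a"
  have per: "\<forall>x y. vge v (x - y) k0 \<longrightarrow> f (mk 0 1 1 x) = f (mk 0 1 1 y)"
  proof (intro allI impI)
    fix x y assume xy: "vge v (x - y) k0"
    show "f (mk 0 1 1 x) = f (mk 0 1 1 y)"
    proof (cases "vge v y a")
      case True
      have "vge v (x - y) k" using vge_mono[OF xy, of k] by (simp add: k0_def)
      then show ?thesis using k[rule_format, of y x] True by simp
    next
      case False
      have "\<not> vge v x a"
      proof
        assume "vge v x a"
        moreover have "vge v (x - y) a" using vge_mono[OF xy, of a] by (simp add: k0_def)
        ultimately have "vge v (x - (x - y)) a" by (rule vge_diff)
        then show False using False by simp
      qed
      then show ?thesis using van False by simp
    qed
  qed
  show ?thesis using van per by (intro exI[of _ a] exI[of _ k0]) (simp add: k0_def)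
qed

lemma per_mono: "(\<forall>x y. vge v (x - y) k0 \<longrightarrow> P x = P y) \<Longrightarrow> k0 \<le> k \<Longrightarrow> (\<forall>x y. vge v (x - y) k \<longrightarrow> P x = P y)"
  using vge_mono by blast

lemma E_scale: assumes "j \<ge> 0"
  shows "rt (mk (pw j) 0 0 1) (E k) = (\<lambda>g. chi 1 (pw j) * E (k + j) g)"
proof
  fix g :: "'a^2^2"
  show "rt (mk (pw j) 0 0 1) (E k) g = chi 1 (pw j) * E (k + j) g"
  proof (cases "g \<in> GL2")
    case False then show ?thesis by (simp add: right_transl_def E_def)
  next
    case True
    obtain a b c d where gd: "g = mk a b c d" by (rule mk_cases)
    have D: "a*d - b*c \<noteq> 0" using True gd by simp
    have prod: "g ** mk (pw j) 0 0 1 = mk (a * pw j) b (c * pw j) d" by (simp add: gd)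
    have det: "a * pw j * d - b * (c * pw j) = (a*d - b*c) * pw j" by (simp add: algebra_simps)
    show ?thesis
    proof (cases "c = 0")
      case True then show ?thesis using D by (simp add: right_transl_def prod E_mk gd)
    next
      case False
      have r: "d / (c * pw j) = (d/c) / pw j" by simp
      have cond: "vge v (d / (c * pw j)) k \<longleftrightarrow> vge v (d/c) (k + j)" by (simp only: r vge_div_iff[OF pw_ne] v_pw)
      have q: "-((a*d - b*c) * pw j) / (c * pw j) = 1 * (-(a*d-b*c)/c)" using False by (simp add: field_simps)
      have ch: "chi (-((a*d - b*c) * pw j) / (c * pw j)) (c * pw j) = chi 1 (pw j) * chi (-(a*d-b*c)/c) c"
        unfolding q by (subst mult.commute[of c]) (rule chi_mult, use False D in auto)
      show ?thesis using True D False cond ch unfolding right_transl_def prod E_mk det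
        by (simp add: gd E_mk)
    qed
  qed
qed


lemma LU_factor0: assumes "de \<noteq> 0" "1 - c*y = de"
  shows "Lm y ** Um (-c) = Um (- (c/de)) ** mk (1/de) 0 0 de ** Lm (y/de)"
proof -
  have e1: "1 / de + - (c / de) * de * (y / de) = 1" using assms by (simp add: field_simps)
  have e2: "- (c / de) * de = - c" using assms by simp
  have e3: "de * (y / de) = y" using assms by simp
  have e0: "1 - y*c = de" using assms by (simp add: mult.commute)
  show ?thesis unfolding Lm_def Um_def using assms e0 e1 e2 e3 by simp
qed

lemma LU_factor: assumes "1 - c*y \<noteq> 0"
  shows "Lm y ** Um (-c) = Um (- (c/(1-c*y))) ** mk (1/(1-c*y)) 0 0 (1-c*y) ** Lm (y/(1-c*y))"
  by (rule LU_factor0[OF assms refl])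

lemma unit_of: "vge v e lev \<Longrightarrow> 1 - e \<noteq> 0 \<and> v (1 - e) = 0"
  using unit_v[of "- e"] vge_mono[of e lev 1] lev by auto

lemma Ind_fun_eq: "f \<in> V \<Longrightarrow> (\<And>g. g \<in> GL2 \<Longrightarrow> f' g = f g) \<Longrightarrow> (\<And>g. g \<notin> GL2 \<Longrightarrow> f' g = 0) \<Longrightarrow> f' = f"
  using Ind_zero by (auto simp: fun_eq_iff) metis

lemma LL: assumes y: "vge v y (lev - k)" shows "rho (Lm y) (phi (E k)) = phi (E k)"
proof -
  define z where "z = phi (E k)"
  obtain m where m: "m \<ge> 1" "\<forall>\<kappa>\<in>K m. rho \<kappa> z = z" using rho_smooth by blast
  define j where "j = max 0 (m - lev + k)"
  have j0: "j \<ge> 0" and jm: "m - j \<le> lev - k" by (auto simp: j_def)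
  obtain R where R: "finite R" "\<forall>c\<in>R. vge v c k" "\<forall>x. vge v x k \<longrightarrow> (\<exists>!c. c \<in> R \<and> vge v (x - c) (k + j))"
    using rep_sys[of k "k + j"] j0 by auto
  define s where "s = (mk (pw j) 0 0 1 :: 'a^2^2)"
  have sB: "s \<in> Borel" and sG: "s \<in> GL2" by (simp_all add: s_def)
  define w where "w = phi (E (k + j))"
  have vanE: "\<forall>x. \<not> vge v x k \<longrightarrow> E k (mk 0 1 1 x) = 0" by (simp add: E_w)
  have perE: "\<forall>x y. vge v (x - y) (k + j) \<longrightarrow> E k (mk 0 1 1 x) = E k (mk 0 1 1 y)"
  proof (intro allI impI)
    fix x y assume xyj: "vge v (x - y) (k + j)"
    have xy: "vge v (x - y) k" using vge_mono[of "x - y" "k + j" k] xyj j0 by simp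
    have "vge v x k \<longleftrightarrow> vge v y k"
    proof
      assume "vge v x k" then have "vge v (x - (x - y)) k" using xy by (rule vge_diff)
      then show "vge v y k" by simp
    next
      assume "vge v y k" then have "vge v ((x - y) + y) k" using xy by (intro vge_add)
      then show "vge v x k" by simp
    qed
    then show "E k (mk 0 1 1 x) = E k (mk 0 1 1 y)" by (simp add: E_w)
  qed
  have EA: "E k = (\<lambda>g. \<Sum>c\<in>R. rt (Um (- c)) (E (k + j)) g)"
  proof -
    have "E k = (\<lambda>g. \<Sum>c\<in>R. E k (mk 0 1 1 c) * rt (Um (- c)) (E (k + j)) g)"
      by (rule decomp[OF E_mem E_1 R(1), of k "k + j" "\<lambda>c. c"]) (use j0 R vanE perE in auto)
    also have "\<dots> = (\<lambda>g. \<Sum>c\<in>R. rt (Um (- c)) (E (k + j)) g)"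
      using R(2) by (intro ext sum.cong) (auto simp: E_w)
    finally show ?thesis .
  qed
  have chij: "chi 1 (pw j) \<noteq> 0" by (simp add: chi_nz)
  have wB: "smul (chi 1 (pw j)) w = rho s z"
  proof -
    have "phi (rt s (E k)) = rho s z" unfolding z_def by (rule phi_borel[OF sB E_mem])
    moreover have "phi (rt s (E k)) = smul (chi 1 (pw j)) w"
      unfolding s_def E_scale[OF j0] w_def by (rule phi_scale[OF E_mem])
    ultimately show ?thesis by simp
  qed
  have wB': "w = smul (inverse (chi 1 (pw j))) (rho s z)"
    using wB chij by (metis VS.scale_one VS.scale_scale field_class.field_inverse mult.commute)
  have wL: "rho (Lm y') w = w" if y': "vge v y' (lev - k)" for y'
  proof -
    have LK: "Lm (y' * pw j) \<in> K m"
      using y' jm by (simp add: Lm_def congr_sub_mk vge_pw_mult) (rule vge_mono, auto)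
    have LG: "Lm y' \<in> GL2" "Lm (y' * pw j) \<in> GL2" by (simp_all add: Lm_def)
    have comm: "Lm y' ** s = s ** Lm (y' * pw j)" by (simp add: Lm_def s_def)
    have "rho (Lm y') (rho s z) = rho (Lm y' ** s) z" using rho_mult[OF LG(1) sG] by simp
    also have "\<dots> = rho s (rho (Lm (y' * pw j)) z)" unfolding comm using rho_mult[OF sG LG(2)] by simp
    also have "\<dots> = rho s z" using m(2) LK by simp
    finally show ?thesis unfolding wB' using rho_smul[OF LG(1)] by simp
  qed
  have wD: "rho (mk al 0 0 de) w = w" if al: "vge v (al - 1) lev" and de: "vge v (de - 1) lev" for al de
  proof -
    have ne: "al \<noteq> 0" "de \<noteq> 0" using unit_near1[OF al lev] unit_near1[OF de lev] by auto
    have "rt (mk al 0 0 de) (E (k + j)) = E (k + j)"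
    proof (rule Ind_fun_eq[OF E_mem])
      fix g :: "'a^2^2" assume g: "g \<in> GL2"
      show "rt (mk al 0 0 de) (E (k + j)) g = E (k + j) g"
        using E_borel_inv[OF g al de, of 0 "k + j"] g by (simp add: right_transl_def)
    qed (simp add: right_transl_def)
    then show ?thesis using phi_borel[OF _ E_mem, of "mk al 0 0 de" "k + j"] ne by (simp add: w_def)
  qed
  define tau where "tau c = c / (1 - c*y)" for c
  have cy: "vge v (c*y) lev" if "vge v c k" for c using vge_mult[OF that y] by simp
  have un: "1 - c*y \<noteq> 0 \<and> v (1 - c*y) = 0" if "vge v c k" for c using unit_of[OF cy[OF that]] .
  have tdiff: "tau c1 - tau c2 = (c1 - c2) / ((1 - c1*y) * (1 - c2*y))" if "vge v c1 k" "vge v c2 k" for c1 c2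
    using un[OF that(1)] un[OF that(2)] by (simp add: tau_def field_simps)
  have tvge: "vge v (tau c1 - tau c2) n \<longleftrightarrow> vge v (c1 - c2) n" if "vge v c1 k" "vge v c2 k" for c1 c2 n
  proof -
    have u: "(1 - c1*y) * (1 - c2*y) \<noteq> 0" "v ((1 - c1*y) * (1 - c2*y)) = 0"
      using un[OF that(1)] un[OF that(2)] by (auto simp: v_mult)
    show ?thesis unfolding tdiff[OF that] using vge_div_v0[OF u] by simp
  qed
  have tk: "vge v (tau c) k" if "vge v c k" for c
    using un[OF that] that by (simp add: tau_def vge_div_v0)
  have tuniq: "\<forall>x. vge v x k \<longrightarrow> (\<exists>!c. c \<in> R \<and> vge v (x - tau c) (k + j))"
  proof (intro allI impI)
    fix x assume x: "vge v x k"
    have xy1: "vge v (x*y) lev" using vge_mult[OF x y] by simp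
    have ux: "1 + x*y \<noteq> 0" "v (1 + x*y) = 0" using unit_of[of "- (x*y)"] xy1 by auto
    define x0 where "x0 = x / (1 + x*y)"
    have x0k: "vge v x0 k" using x ux by (simp add: x0_def vge_div_v0)
    have tx0: "tau x0 = x" using ux by (simp add: tau_def x0_def field_simps)
    obtain c where c: "c \<in> R" "vge v (x0 - c) (k + j)" using R(3) x0k by blast
    have ex: "c \<in> R \<and> vge v (x - tau c) (k + j)"
      using c tvge[OF x0k R(2)[rule_format, OF c(1)]] tx0 by simp
    have un2: "c1 = c2" if "c1 \<in> R \<and> vge v (x - tau c1) (k + j)" "c2 \<in> R \<and> vge v (x - tau c2) (k + j)" for c1 c2
    proof -
      have k1: "vge v c1 k" "vge v c2 k" using that R(2) by auto
      have "vge v ((x - tau c2) - (x - tau c1)) (k + j)" by (rule vge_diff) (use that in auto)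
      then have "vge v (tau c1 - tau c2) (k + j)" by simp
      then have d12: "vge v (c1 - c2) (k + j)" using tvge[OF k1] by simp
      obtain c3 where c3: "c3 \<in> R" "vge v (c1 - c3) (k + j)" "\<forall>c'. c' \<in> R \<and> vge v (c1 - c') (k + j) \<longrightarrow> c' = c3"
        using R(3) k1(1) by metis
      have "c1 = c3" using c3(3) that(1) by simp
      moreover have "c2 = c3" using c3(3) that(2) d12 by simp
      ultimately show ?thesis by simp
    qed
    show "\<exists>!c. c \<in> R \<and> vge v (x - tau c) (k + j)" using ex un2 by blast
  qed
  have termV: "\<And>c. rt (Um c) (E (k + j)) \<in> V" by (rule rt_mem[OF E_mem]) (simp add: Um_def)
  have UG: "\<And>c. Um c \<in> GL2" "\<And>c. Um c \<in> Borel" by (simp_all add: Um_def)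
  have z_sum: "z = (\<Sum>c\<in>R. rho (Um (- c)) w)"
  proof -
    have "z = phi (\<lambda>g. \<Sum>c\<in>R. rt (Um (- c)) (E (k + j)) g)" unfolding z_def by (subst EA) simp
    also have "\<dots> = (\<Sum>c\<in>R. phi (rt (Um (- c)) (E (k + j))))" by (rule phi_sum[OF R(1) termV])
    also have "\<dots> = (\<Sum>c\<in>R. rho (Um (- c)) w)" unfolding w_def by (intro sum.cong refl phi_borel[OF UG(2) E_mem])
    finally show ?thesis .
  qed
  have each: "rho (Lm y) (rho (Um (- c)) w) = rho (Um (- tau c)) w" if c: "c \<in> R" for c
  proof -
    have ck: "vge v c k" using R(2) c by blast
    note u = un[OF ck]
    have yl: "vge v (y/(1 - c*y)) (lev - k)" using y u by (simp add: vge_div_v0)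
    have a1: "vge v (1/(1 - c*y) - 1) lev"
    proof -
      have "1/(1 - c*y) - 1 = (c*y)/(1 - c*y)" using u by (simp add: field_simps)
      then show ?thesis using cy[OF ck] u by (simp add: vge_div_v0)
    qed
    have a2: "vge v ((1 - c*y) - 1) lev" using cy[OF ck] by simp
    have G: "Lm y \<in> GL2" "Um (- c) \<in> GL2" "Um (- tau c) \<in> GL2" "mk (1/(1-c*y)) 0 0 (1-c*y) \<in> GL2"
      "Lm (y/(1-c*y)) \<in> GL2" using u by (simp_all add: Lm_def Um_def)
    have "rho (Lm y) (rho (Um (- c)) w) = rho (Lm y ** Um (- c)) w" using rho_mult[OF G(1,2)] by simp
    also have "\<dots> = rho (Um (- tau c) ** mk (1/(1-c*y)) 0 0 (1-c*y) ** Lm (y/(1-c*y))) w"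
      unfolding LU_factor[OF u[THEN conjunct1]] tau_def ..
    also have "\<dots> = rho (Um (- tau c)) (rho (mk (1/(1-c*y)) 0 0 (1-c*y)) (rho (Lm (y/(1-c*y))) w))"
      using rho_mult[OF GL2_mult[OF G(3,4)] G(5)] rho_mult[OF G(3,4)] by simp
    also have "\<dots> = rho (Um (- tau c)) w" using wL[OF yl] wD[OF a1 a2] by simp
    finally show ?thesis .
  qed
  have "rho (Lm y) z = (\<Sum>c\<in>R. rho (Lm y) (rho (Um (- c)) w))"
    unfolding z_sum by (rule rho_sum) (simp add: Lm_def)
  also have "\<dots> = (\<Sum>c\<in>R. rho (Um (- tau c)) w)" by (rule sum.cong) (simp_all add: each)
  also have "\<dots> = (\<Sum>c\<in>R. phi (rt (Um (- tau c)) (E (k + j))))"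
    unfolding w_def by (intro sum.cong refl phi_borel[OF UG(2) E_mem, symmetric])
  also have "\<dots> = phi (\<lambda>g. \<Sum>c\<in>R. rt (Um (- tau c)) (E (k + j)) g)" by (rule phi_sum[OF R(1) termV, symmetric])
  also have "(\<lambda>g. \<Sum>c\<in>R. rt (Um (- tau c)) (E (k + j)) g) = E k"
  proof -
    have "E k = (\<lambda>g. \<Sum>c\<in>R. E k (mk 0 1 1 (tau c)) * rt (Um (- tau c)) (E (k + j)) g)"
      by (rule decomp[OF E_mem E_1 R(1), of k "k + j" tau]) (use j0 R vanE perE tk tuniq in auto)
    also have "\<dots> = (\<lambda>g. \<Sum>c\<in>R. rt (Um (- tau c)) (E (k + j)) g)"
      using R(2) tk by (intro ext sum.cong) (auto simp: E_w)
    finally show ?thesis by simp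
  qed
  finally show ?thesis unfolding z_def .
qed


lemma E_Linv_fun: "vge v y (lev - k) \<Longrightarrow> rt (Lm y) (E k) = E k"
  by (rule Ind_fun_eq[OF E_mem]) (auto simp: right_transl_def E_L_inv)

lemma phi_sum_scale: assumes "finite I" "\<And>i. i \<in> I \<Longrightarrow> F i \<in> V"
  shows "phi (\<lambda>x. \<Sum>i\<in>I. co i * F i x) = (\<Sum>i\<in>I. smul (co i) (phi (F i)))"
proof -
  have "phi (\<lambda>x. \<Sum>i\<in>I. co i * F i x) = (\<Sum>i\<in>I. phi (\<lambda>x. co i * F i x))"
    by (rule phi_sum[OF assms(1)]) (use assms(2) Ind_scale in auto)
  also have "\<dots> = (\<Sum>i\<in>I. smul (co i) (phi (F i)))" using assms(2) by (intro sum.cong refl phi_scale) auto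
  finally show ?thesis .
qed

lemma claimB:
  assumes f: "f \<in> V" and f1: "f (mat 1) = 0" and g: "g \<in> GL2" and fg: "f g = 0"
  shows "phi (rt g f) = rho g (phi f)"
proof -
  obtain a b c d where gd: "g = mk a b c d" by (rule mk_cases)
  have D: "a*d - b*c \<noteq> 0" using g gd by simp
  show ?thesis
  proof (cases "c = 0")
    case True
    then have "g \<in> Borel" using gd D by auto
    then show ?thesis by (rule phi_borel[OF _ f])
  next
    case cne: False
    define x0 where "x0 = d / c"
    have fx0: "f (mk 0 1 1 x0) = 0"
      using Ind_cne[OF f cne D] fg gd chi_nz[of "-(a*d-b*c)/c" c] cne D unfolding x0_def by simp
    obtain a0 k0 where ak: "a0 \<le> k0" "\<forall>x. \<not> vge v x a0 \<longrightarrow> f (mk 0 1 1 x) = 0"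
        "\<forall>x y. vge v (x - y) k0 \<longrightarrow> f (mk 0 1 1 x) = f (mk 0 1 1 y)"
      using S_struct[OF f f1] by blast
    define k where "k = k0 + lev"
    have kk: "a0 \<le> k" "k0 \<le> k" using ak(1) lev by (auto simp: k_def)
    have perk: "\<forall>x y. vge v (x - y) k \<longrightarrow> f (mk 0 1 1 x) = f (mk 0 1 1 y)"
      by (rule per_mono[OF ak(3) kk(2)])
    obtain R where R: "finite R" "\<forall>r\<in>R. vge v r a0" "\<forall>x. vge v x a0 \<longrightarrow> (\<exists>!r. r \<in> R \<and> vge v (x - r) k)"
      using rep_sys[OF kk(1)] by blast
    have fdec: "f = (\<lambda>x. \<Sum>r\<in>R. f (mk 0 1 1 r) * rt (Um (- r)) (E k) x)"
      by (rule decomp[OF f f1 R(1) kk(1)]) (use R ak(2) perk in auto)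
    have UG: "\<And>r. Um r \<in> GL2" "\<And>r. Um r \<in> Borel" by (simp_all add: Um_def)
    have tV: "\<And>r. rt (Um (- r)) (E k) \<in> V" by (rule rt_mem[OF E_mem UG(1)])
    have tV2: "\<And>r. rt (g ** Um (- r)) (E k) \<in> V" by (rule rt_mem[OF E_mem GL2_mult[OF g UG(1)]])
    have lhs: "phi (rt g f) = (\<Sum>r\<in>R. smul (f (mk 0 1 1 r)) (phi (rt (g ** Um (- r)) (E k))))"
    proof -
      have "rt g f = (\<lambda>x. \<Sum>r\<in>R. f (mk 0 1 1 r) * rt (g ** Um (- r)) (E k) x)"
        by (subst fdec) (simp add: rt_linear_sum rt_linear_scale rt_rt[OF g UG(1)])
      then show ?thesis using phi_sum_scale[OF R(1) tV2] by simp
    qed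
    have rhs: "rho g (phi f) = (\<Sum>r\<in>R. smul (f (mk 0 1 1 r)) (rho (g ** Um (- r)) (phi (E k))))"
    proof -
      have "phi f = (\<Sum>r\<in>R. smul (f (mk 0 1 1 r)) (phi (rt (Um (- r)) (E k))))"
        by (subst fdec) (rule phi_sum_scale[OF R(1) tV])
      also have "\<dots> = (\<Sum>r\<in>R. smul (f (mk 0 1 1 r)) (rho (Um (- r)) (phi (E k))))"
        by (intro sum.cong refl arg_cong[where f="smul _"] phi_borel[OF UG(2) E_mem])
      finally have "rho g (phi f) = rho g (\<Sum>r\<in>R. smul (f (mk 0 1 1 r)) (rho (Um (- r)) (phi (E k))))" by simp
      also have "\<dots> = (\<Sum>r\<in>R. smul (f (mk 0 1 1 r)) (rho g (rho (Um (- r)) (phi (E k)))))"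
        by (simp add: rho_sum[OF g] rho_smul[OF g])
      also have "\<dots> = (\<Sum>r\<in>R. smul (f (mk 0 1 1 r)) (rho (g ** Um (- r)) (phi (E k))))"
        by (simp add: rho_mult[OF g UG(1)])
      finally show ?thesis .
    qed
    have eachr: "smul (f (mk 0 1 1 r)) (phi (rt (g ** Um (- r)) (E k))) =
                 smul (f (mk 0 1 1 r)) (rho (g ** Um (- r)) (phi (E k)))" for r
    proof (cases "f (mk 0 1 1 r) = 0")
      case True then show ?thesis by simp
    next
      case False
      have nr: "\<not> vge v (r - x0) k0" using ak(3) fx0 False by metis
      then have xr: "x0 - r \<noteq> 0" by auto
      have vr: "v (x0 - r) < k0" using nr xr by (simp add: vge_iff vge_commute_diff[of r x0])
      define de where "de = d - c * r"
      have de: "de = c * (x0 - r)" using cne by (simp add: de_def x0_def field_simps)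
      have dne: "de \<noteq> 0" using de cne xr by simp
      define y where "y = c / de"
      have yv: "y = inverse (x0 - r)" using de cne by (simp add: y_def inverse_eq_divide)
      have yl: "vge v y (lev - k)" using xr vr by (simp add: yv vge_iff v_inverse k_def)
      define bb where "bb = mk ((a*d - b*c)/de) (b - a*r) 0 de"
      have bbB: "bb \<in> Borel" using D dne by (simp add: bb_def)
      have fac: "g ** Um (- r) = bb ** Lm y"
      proof -
        have e0: "(a*d - b*c) + (b - a*r)*c = a * de" by (simp add: de_def algebra_simps)
        have "(a*d - b*c)/de * 1 + (b - a*r) * (c/de) = ((a*d - b*c) + (b - a*r)*c)/de"
          by (simp add: add_divide_distrib)
        then have e1: "(a*d - b*c)/de * 1 + (b - a*r) * (c/de) = a" unfolding e0 using dne by simp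
        have l: "g ** Um (- r) = mk a (b - a*r) c de" by (simp add: gd Um_def de_def algebra_simps)
        have rr: "bb ** Lm y = mk a (b - a*r) c de"
          unfolding bb_def Lm_def y_def mk_mult mk_eq_iff using e1 dne by simp
        show ?thesis using l rr by simp
      qed
      have LG: "Lm y \<in> GL2" by (simp add: Lm_def)
      have "phi (rt (g ** Um (- r)) (E k)) = phi (rt bb (rt (Lm y) (E k)))"
        unfolding fac rt_rt[OF Borel_GL2[OF bbB] LG] ..
      also have "\<dots> = rho bb (phi (E k))" unfolding E_Linv_fun[OF yl] by (rule phi_borel[OF bbB E_mem])
      also have "\<dots> = rho bb (rho (Lm y) (phi (E k)))" using LL[OF yl] by simp
      also have "\<dots> = rho (g ** Um (- r)) (phi (E k))" unfolding fac by (rule rho_mult[OF Borel_GL2[OF bbB] LG, symmetric])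
      finally show ?thesis by simp
    qed
    show ?thesis unfolding lhs rhs by (rule sum.cong[OF refl eachr])
  qed
qed


definition cc :: "'a^2^2 \<Rightarrow> ('a^2^2 \<Rightarrow> 'k) \<Rightarrow> 'v" where
  "cc g f = phi (rt g f) - rho g (phi f)"

lemma cc_diff: assumes g: "g \<in> GL2" and f: "f1 \<in> V" "f2 \<in> V"
  shows "cc g (\<lambda>x. f1 x - f2 x) = cc g f1 - cc g f2"
proof -
  have "phi (rt g (\<lambda>x. f1 x - f2 x)) = phi (rt g f1) - phi (rt g f2)"
    unfolding rt_linear_diff by (rule phi_diff[OF rt_mem[OF f(1) g] rt_mem[OF f(2) g]])
  moreover have "rho g (phi (\<lambda>x. f1 x - f2 x)) = rho g (phi f1) - rho g (phi f2)"
    by (simp add: phi_diff[OF f] rho_diff[OF g])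
  ultimately show ?thesis by (simp add: cc_def)
qed

lemma cc_scale: assumes g: "g \<in> GL2" and f: "f \<in> V"
  shows "cc g (\<lambda>x. c * f x) = smul c (cc g f)"
proof -
  have "phi (rt g (\<lambda>x. c * f x)) = smul c (phi (rt g f))"
    unfolding rt_linear_scale by (rule phi_scale[OF rt_mem[OF f g]])
  moreover have "rho g (phi (\<lambda>x. c * f x)) = smul c (rho g (phi f))"
    by (simp add: phi_scale[OF f] rho_smul[OF g])
  ultimately show ?thesis by (simp add: cc_def VS.scale_right_diff_distrib)
qed

lemma cc_B: "f \<in> V \<Longrightarrow> f (mat 1) = 0 \<Longrightarrow> g \<in> GL2 \<Longrightarrow> f g = 0 \<Longrightarrow> cc g f = 0"
  using claimB by (simp add: cc_def)

lemma L_lin: assumes g: "g \<in> GL2" and f: "f \<in> V" and F: "F \<in> V" and F1: "F (mat 1) = 1"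
    and fg: "f g = 0" and Fg: "F g = 0"
  shows "cc g f = smul (f (mat 1)) (cc g F)"
proof -
  have sV: "(\<lambda>x. f (mat 1) * F x) \<in> V" by (rule Ind_scale[OF F])
  have "cc g (\<lambda>x. f x - f (mat 1) * F x) = 0"
    by (rule cc_B[OF Ind_diff[OF f sV] _ g]) (use F1 fg Fg in simp_all)
  moreover have "cc g (\<lambda>x. f x - f (mat 1) * F x) = cc g f - smul (f (mat 1)) (cc g F)"
    using cc_diff[OF g f sV] cc_scale[OF g F] by simp
  ultimately show ?thesis by simp
qed

lemma cc_left: assumes b: "b \<in> Borel" and g: "g \<in> GL2" and f: "f \<in> V"
  shows "cc (b ** g) f = rho b (cc g f)"
proof -
  have bG: "b \<in> GL2" by (rule Borel_GL2[OF b])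
  have "phi (rt (b ** g) f) = rho b (phi (rt g f))"
    unfolding rt_rt[OF bG g, symmetric] by (rule phi_borel[OF b rt_mem[OF f g]])
  then show ?thesis by (simp add: cc_def rho_mult[OF bG g] rho_diff[OF bG])
qed

lemma cc_right: assumes b: "b \<in> Borel" and g: "g \<in> GL2" and f: "f \<in> V"
  shows "cc (g ** b) f = cc g (rt b f)"
proof -
  have bG: "b \<in> GL2" by (rule Borel_GL2[OF b])
  show ?thesis unfolding cc_def rt_rt[OF g bG, symmetric] rho_mult[OF g bG] phi_borel[OF b f] ..
qed

lemma cc_cocycle: assumes g1: "g1 \<in> GL2" and g2: "g2 \<in> GL2" and f: "f \<in> V"
  shows "cc (g1 ** g2) f = cc g1 (rt g2 f) + rho g1 (cc g2 f)"
  unfolding cc_def rt_rt[OF g1 g2, symmetric] rho_mult[OF g1 g2] rho_diff[OF g1] by simp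

definition F :: "int \<Rightarrow> 'a^2^2 \<Rightarrow> 'k" where "F k = rt Wm (E k)"

lemma Wm_GL2: "Wm \<in> GL2" by (simp add: Wm_def)

lemma F_mem: "F k \<in> V" unfolding F_def by (rule rt_mem[OF E_mem Wm_GL2])

lemma F_val: "F k (mk a b c d) = E k (mk b a d c)"
  by (simp add: F_def right_transl_def Wm_def E_mk algebra_simps)

lemma F_1: "F k (mat 1) = 1" by (simp add: mat1_mk F_val E_w)

lemma F_Wm: "F k Wm = 0" by (simp add: Wm_def F_val E_mk)

lemma F_van: assumes "g $ 2 $ 1 \<noteq> 0" shows "\<exists>k0. \<forall>k\<ge>k0. F k g = 0"
proof -
  obtain a b c d where gd: "g = mk a b c d" by (rule mk_cases)
  have c: "c \<noteq> 0" using assms gd by simp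
  show ?thesis
  proof (cases "d = 0")
    case True then show ?thesis by (simp add: gd F_val E_mk)
  next
    case False
    show ?thesis
    proof (intro exI[of _ "v (c/d) + 1"] allI impI)
      fix k assume "v (c/d) + 1 \<le> k"
      then have "\<not> vge v (c/d) k" using c False by (simp add: vge_iff)
      then show "F k g = 0" by (simp add: gd F_val E_mk)
    qed
  qed
qed


definition gam :: 'v where "gam = cc Wm (F 0)"

lemma Tlin_w: assumes f: "f \<in> V" and fw: "f Wm = 0" shows "cc Wm f = smul (f (mat 1)) gam"
  unfolding gam_def by (rule L_lin[OF Wm_GL2 f F_mem F_1 fw F_Wm])

lemma gam_L: "rho (Lm y) gam = gam"
proof (cases "y = 0")
  case True then show ?thesis by (simp add: Lm_def mat1_mk[symmetric] rho_one)
next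
  case False
  have LG: "Lm y \<in> GL2" by (simp add: Lm_def)
  have LW: "Lm y ** Wm = mk 0 1 1 y" by (simp add: Lm_def Wm_def)
  obtain k0 where k0: "\<forall>k\<ge>k0. F k (mk 0 1 1 y) = 0" using F_van[of "mk 0 1 1 y"] by auto
  define k where "k = k0"
  have Fk: "F k (Lm y ** Wm) = 0" using k0 LW by (simp add: k_def)
  have "cc (Lm y ** Wm) (F k) = cc (Lm y) (rt Wm (F k)) + rho (Lm y) (cc Wm (F k))"
    by (rule cc_cocycle[OF LG Wm_GL2 F_mem])
  moreover have "cc (Lm y) (rt Wm (F k)) = 0"
    by (rule cc_B[OF rt_mem[OF F_mem Wm_GL2] _ LG]) (use Fk F_Wm LG in \<open>simp_all add: right_transl_def Wm_GL2\<close>)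
  moreover have "cc Wm (F k) = gam" using Tlin_w[OF F_mem F_Wm] F_1 by simp
  ultimately have 1: "cc (Lm y ** Wm) (F k) = rho (Lm y) gam" by simp
  have UB: "Um y \<in> Borel" and UG: "Um y \<in> GL2" by (simp_all add: Um_def)
  have WU: "Lm y ** Wm = Wm ** Um y" by (simp add: Lm_def Wm_def Um_def)
  have "cc (Wm ** Um y) (F k) = cc Wm (rt (Um y) (F k))" by (rule cc_right[OF UB Wm_GL2 F_mem])
  also have "\<dots> = smul (rt (Um y) (F k) (mat 1)) gam"
    by (rule Tlin_w[OF rt_mem[OF F_mem UG]]) (use Fk WU Wm_GL2 in \<open>simp add: right_transl_def\<close>)
  also have "rt (Um y) (F k) (mat 1) = 1"
    using Ind_mat1_eq[OF F_mem UB, of k] F_1 by (simp add: right_transl_def Um_def)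
  finally show ?thesis using 1 WU by simp
qed

lemma gam_T: assumes "al \<noteq> 0" "de \<noteq> 0" shows "rho (mk al 0 0 de) gam = smul (chi de al) gam"
proof -
  have tB: "mk al 0 0 de \<in> Borel" "mk de 0 0 al \<in> Borel" using assms by simp_all
  have tG: "mk de 0 0 al \<in> GL2" using assms by simp
  have com: "mk al 0 0 de ** Wm = Wm ** mk de 0 0 al" by (simp add: Wm_def)
  have "cc (mk al 0 0 de ** Wm) (F 0) = rho (mk al 0 0 de) gam"
    unfolding gam_def by (rule cc_left[OF tB(1) Wm_GL2 F_mem])
  moreover have "cc (Wm ** mk de 0 0 al) (F 0) = smul (chi de al) gam"
  proof -
    have "cc (Wm ** mk de 0 0 al) (F 0) = cc Wm (rt (mk de 0 0 al) (F 0))" by (rule cc_right[OF tB(2) Wm_GL2 F_mem])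
    also have "\<dots> = smul (rt (mk de 0 0 al) (F 0) (mat 1)) gam"
    proof (rule Tlin_w[OF rt_mem[OF F_mem tG]])
      have "F 0 (mk al 0 0 de ** Wm) = chi al de * F 0 Wm" using Ind_borel[OF F_mem tB(1) Wm_GL2] by simp
      then show "rt (mk de 0 0 al) (F 0) Wm = 0" using com Wm_GL2 by (simp add: right_transl_def F_Wm)
    qed
    also have "rt (mk de 0 0 al) (F 0) (mat 1) = chi de al"
      using Ind_mat1_eq[OF F_mem tB(2), of 0] F_1 by (simp add: right_transl_def)
    finally show ?thesis .
  qed
  ultimately show ?thesis using com by simp
qed

lemma gam_zero: "gam = 0"
proof -
  obtain m where m: "m \<ge> 1" "\<forall>\<kappa>\<in>K m. rho \<kappa> gam = gam" using rho_smooth by blast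
  have gU: "rho (Um x) gam = gam" if "vge v x m" for x
    using m(2) that by (simp add: Um_def congr_sub_mk)
  obtain a0 d0 where ad: "a0 \<noteq> 0" "d0 \<noteq> 0" "chi a0 d0 \<noteq> chi d0 a0" using chi_ne by blast
  define a where "a = d0 / a0"
  have a0': "a \<noteq> 0" using ad by (simp add: a_def)
  have "chi a0 d0 = chi (d0 * (a0/d0)) (a0 * (d0/a0))" using ad by simp
  also have "\<dots> = chi d0 a0 * chi (a0/d0) (d0/a0)" by (rule chi_mult) (use ad in auto)
  finally have cha: "chi (1/a) a \<noteq> 1" using ad by (auto simp: a_def)
  define M where "M = m + \<bar>v a\<bar>"
  define t where "t = inverse (pw M)"
  define t' where "t' = a * t"
  have tne: "t \<noteq> 0" "t' \<noteq> 0" using a0' by (simp_all add: t_def t'_def)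
  have t1: "1/t = pw M" by (simp add: t_def inverse_eq_divide)
  have vt: "vge v (1/t) m" unfolding t1 by (simp add: vge_iff M_def)
  have vt': "vge v (1/t') m"
  proof -
    have "1/t' = pw M / a" by (simp add: t'_def t_def field_simps)
    then show ?thesis using a0' by (simp add: vge_iff v_divide M_def)
  qed
  have prod: "mk a 0 0 (1/a) = Lm t ** Um (- (1/t)) ** Lm t ** (Lm (- t') ** Um (1/t') ** Lm (- t'))"
    using tne a0' by (simp add: Lm_def Um_def t'_def field_simps)
  have G: "\<And>y. Lm y \<in> GL2" "\<And>x. Um x \<in> GL2" by (simp_all add: Lm_def Um_def)
  have vt1: "vge v (- (1/t)) m" using vt by simp
  have "rho (Lm t ** Um (- (1/t)) ** Lm t ** (Lm (- t') ** Um (1/t') ** Lm (- t'))) gam = gam"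
    by (simp add: rho_mult G GL2_mult gam_L gU[OF vt1] gU[OF vt'])
  then have "rho (mk a 0 0 (1/a)) gam = gam" using prod by simp
  moreover have "rho (mk a 0 0 (1/a)) gam = smul (chi (1/a) a) gam" using gam_T a0' by simp
  ultimately have "smul (chi (1/a) a) gam = smul 1 gam" by simp
  then have "smul (chi (1/a) a - 1) gam = 0" by (simp add: VS.scale_left_diff_distrib)
  then show ?thesis using cha by simp
qed

lemma T_all: assumes g: "g \<in> GL2" and c: "g $ 2 $ 1 \<noteq> 0" and f: "f \<in> V" and fg: "f g = 0"
  shows "cc g f = 0"
proof -
  obtain a b c d where gd: "g = mk a b c d" by (rule mk_cases)
  have D: "a*d - b*c \<noteq> 0" and cn: "c \<noteq> 0" using g gd c by auto
  define bb where "bb = mk (-(a*d-b*c)/c) a 0 c"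
  have bbB: "bb \<in> Borel" using D cn by (simp add: bb_def)
  have UG: "Um (d/c) \<in> GL2" by (simp add: Um_def)
  have WUG: "Wm ** Um (d/c) \<in> GL2" by (rule GL2_mult[OF Wm_GL2 UG])
  have fac: "g = bb ** (Wm ** Um (d/c))"
    using cn by (simp add: gd bb_def Wm_def Um_def field_simps)
  have fw: "f (Wm ** Um (d/c)) = 0"
  proof -
    have "f g = chi (bb$1$1) (bb$2$2) * f (Wm ** Um (d/c))" unfolding fac by (rule Ind_borel[OF f bbB WUG])
    then show ?thesis using fg chi_nz[of "-(a*d-b*c)/c" c] D cn by (simp add: bb_def)
  qed
  have "cc g f = rho bb (cc (Wm ** Um (d/c)) f)" unfolding fac by (rule cc_left[OF bbB WUG f])
  also have "cc (Wm ** Um (d/c)) f = cc Wm (rt (Um (d/c)) f)"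
    by (rule cc_right) (use f in \<open>simp_all add: Um_def Wm_GL2\<close>)
  also have "\<dots> = smul (rt (Um (d/c)) f (mat 1)) gam"
    by (rule Tlin_w[OF rt_mem[OF f UG]]) (use fw Wm_GL2 in \<open>simp add: right_transl_def\<close>)
  finally show ?thesis using gam_zero rho_0[OF Borel_GL2[OF bbB]] by simp
qed

theorem main: assumes h: "h \<in> GL2" and f: "f \<in> V" shows "phi (rt h f) = rho h (phi f)"
proof (cases "h $ 2 $ 1 = 0")
  case True
  then have "h \<in> Borel" using h by (simp add: Borel_def)
  then show ?thesis by (rule phi_borel[OF _ f])
next
  case False
  obtain hi where hi: "h ** hi = mat 1" "hi ** h = mat 1" "hi \<in> GL2" using GL2_inv[OF h] by blast
  have hi21: "hi $ 2 $ 1 \<noteq> 0"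
  proof
    assume z: "hi $ 2 $ 1 = 0"
    have "(hi ** h) $ 2 $ 1 = 0" "(hi ** h) $ 2 $ 2 = 1" using hi(2) by (simp_all add: mat_def)
    then have "hi$2$2 * h$2$1 = 0" "hi$2$2 * h$2$2 = 1" using z by (simp_all add: matrix_matrix_mult_def sum_2)
    then show False using False by auto
  qed
  obtain k0 where k0: "\<forall>k\<ge>k0. F k hi = 0" using F_van[OF hi21] by blast
  define G where "G = rt hi (F k0)"
  have GV: "G \<in> V" unfolding G_def by (rule rt_mem[OF F_mem hi(3)])
  have Gh: "G h = 1" using h hi(1) F_1 by (simp add: G_def right_transl_def)
  have ccG: "cc h G = 0"
  proof -
    have "cc hi (F k0) = 0" by (rule T_all[OF hi(3) hi21 F_mem]) (use k0 in simp)
    then have "phi (rt hi (F k0)) = rho hi (phi (F k0))" by (simp add: cc_def)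
    moreover have "phi (rt h G) = phi (F k0)" unfolding G_def rt_rt[OF h hi(3)] hi(1) rt_one[OF F_mem] ..
    moreover have "rho h (rho hi x) = x" for x using rho_mult[OF h hi(3)] hi(1) rho_one by simp
    ultimately show ?thesis by (simp add: cc_def G_def)
  qed
  have sV: "(\<lambda>x. f h * G x) \<in> V" by (rule Ind_scale[OF GV])
  have "cc h (\<lambda>x. f x - f h * G x) = 0"
    by (rule T_all[OF h False Ind_diff[OF f sV]]) (use Gh in simp)
  moreover have "cc h (\<lambda>x. f x - f h * G x) = cc h f - smul (f h) (cc h G)"
    using cc_diff[OF h f sV] cc_scale[OF h GV] by simp
  ultimately have "cc h f = 0" using ccG by simp
  then show ?thesis by (simp add: cc_def)
qed

end

theorem corollary5p5:
  fixes v :: "'a::field \<Rightarrow> int" and p :: nat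
    and chi :: "'a \<Rightarrow> 'a \<Rightarrow> 'k::field"
    and smul :: "'k \<Rightarrow> 'v::ab_group_add \<Rightarrow> 'v" and rho :: "'a^2^2 \<Rightarrow> 'v \<Rightarrow> 'v"
  assumes "nonarch_local_field v p"
    and "is_alg_closure_Fp TYPE('k) p"
    and "smooth_character v chi"
    and "\<not> char_eq chi (char_swap chi)"
    and "smooth_rep v smul rho"
  shows "Hom_H GL2 v chi smul rho = Hom_H Borel v chi smul rho"
proof
  show "Hom_H GL2 v chi smul rho \<subseteq> Hom_H Borel v chi smul rho"
    unfolding Hom_H_def using Borel_GL2 by blast
next
  show "Hom_H Borel v chi smul rho \<subseteq> Hom_H GL2 v chi smul rho"
  proof
    fix phi assume phi: "phi \<in> Hom_H Borel v chi smul rho"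
    have dv: "discrete_valuation v" using assms(1) by (simp add: nonarch_local_field_def)
    have cpl: "\<And>s :: nat \<Rightarrow> 'a. (\<forall>n. \<exists>N. \<forall>i\<ge>N. \<forall>j\<ge>N. vge v (s i - s j) n) \<Longrightarrow>
          (\<exists>L. \<forall>n. \<exists>N. \<forall>i\<ge>N. vge v (s i - L) n)"
      using assms(1) unfolding nonarch_local_field_def by blast
    obtain R0 where R0: "finite R0" "R0 \<subseteq> {x. vge v x 0}" "\<forall>x. vge v x 0 \<longrightarrow> (\<exists>r\<in>R0. vge v (x - r) 1)"
      using assms(1) unfolding nonarch_local_field_def by blast
    obtain n where n: "n \<ge> 1" "\<forall>a d. vge v (a - 1) n \<longrightarrow> vge v (d - 1) n \<longrightarrow> chi a d = 1"
      using assms(3) unfolding smooth_character_def by blast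
    have cm: "\<forall>a d a' d'. a \<noteq> 0 \<longrightarrow> d \<noteq> 0 \<longrightarrow> a' \<noteq> 0 \<longrightarrow> d' \<noteq> 0 \<longrightarrow>
        chi (a * a') (d * d') = chi a d * chi a' d'" "\<forall>a d. a \<noteq> 0 \<longrightarrow> d \<noteq> 0 \<longrightarrow> chi a d \<noteq> 0"
      using assms(3) unfolding smooth_character_def by blast+
    have cne: "\<exists>a d. a \<noteq> 0 \<and> d \<noteq> 0 \<and> chi a d \<noteq> chi d a"
      using assms(4) unfolding char_eq_def char_swap_def by blast
    interpret S: setting v chi smul rho phi n R0
    proof (unfold_locales)
      show "discrete_valuation v" by (rule dv)
    qed (use cm n cne cpl R0 assms(5) phi in auto)
    show "phi \<in> Hom_H GL2 v chi smul rho"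
      using phi S.main unfolding Hom_H_def by blast
  qed
qed


end
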